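(* Let $A\in\mathscr R$ be fixed and let $V_1,V_2$ be distributions on $[0,\infty)^d$ with $V_1,V_2\in\mathcal L_A$ and $K^-_{V_A^{(1)}}\wedge K^-_{V_A^{(2)}}>0$, where $V_A^{(i)}$ denotes $(V_i)_A$. Then $V_1*V_2\in\mathcal A^*_A$ if and only if $V_A^{(1)}*V_A^{(2)}\in\mathcal A^*$.
   Context: $\mathscr R$ is the family of open, increasing ($\mathbf z\in A,\mathbf y\in[0,\infty)^d\Rightarrow\mathbf z+\mathbf y\in A$) sets $A\subsetneq\mathbb R^d$ with convex complement and $\mathbf 0\notin\overline A$. For a distribution $V$ on $[0,\infty)^d$ with $\mathbf Z\sim V$, $V_A$ is the (proper) distribution of $Z_A=\sup\{u:\mathbf Z\in uA\}$, so $\overline{V_A}(x)=\mathbf P(\mathbf Z\in xA)$. $V_1*V_2\in\mathcal B_A$ means: for independent $\mathbf Z^{(1)}\sim V_1,\mathbf Z^{(2)}\sim V_2$, the distribution of $\sup\{u:\mathbf Z^{(1)}+\mathbf Z^{(2)}\in uA\}$ is in $\mathcal B$. One-dimensional classes (distributions with infinite right endpoint): $\mathcal L$: $\overline B(x-y)/\overline B(x)\to1$ for all $y>0$; $\mathcal S$: $\overline{B^{n*}}(x)\sim n\overline B(x)$, $n\ge2$; $\overline{B^*}(v)=\limsup_x\overline B(vx)/\overline B(x)$, $K_B^-=-\lim_{v\downarrow1}\log\overline{B^*}(v)/\log v$; $\mathcal A^*=\{B\in\mathcal S:K_B^->0\}$. $V\in\mathcal L_A$ iff $V_A\in\mathcal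 L$; $V\in\mathcal A^*_A$ iff $V_A\in\mathcal A^*$. *)

theory Defs
  imports "HOL-Analysis.Analysis" "HOL-Probability.Probability" "HOL-Probability.Convolution"
begin

definition orthant :: "(real ^ 'd) set" where
  "orthant = {x. \<forall>i. 0 \<le> x $ i}"

definition classR :: "(real ^ 'd) set \<Rightarrow> bool" where
  "classR A \<longleftrightarrow> open A \<and> A \<noteq> UNIV
     \<and> (\<forall>z\<in>A. \<forall>y\<in>orthant. z + y \<in> A)
     \<and> convex (- A) \<and> 0 \<notin> closure A"

definition distr_orthant :: "(real ^ 'd) measure \<Rightarrow> bool" where
  "distr_orthant V \<longleftrightarrow> prob_space V \<and> sets V = sets borel \<and> emeasure V orthant = 1"

text \<open>Z_A = sup{u : z in uA} (u > 0; the supremum of the empty set is taken to be 0).\<close>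
definition ZA :: "(real ^ 'd) set \<Rightarrow> real ^ 'd \<Rightarrow> real" where
  "ZA A z = Sup ({u. u > 0 \<and> z \<in> (\<lambda>a. u *\<^sub>R a) ` A} \<union> {0})"

definition VA :: "(real ^ 'd) set \<Rightarrow> (real ^ 'd) measure \<Rightarrow> real measure" where
  "VA A V = distr V borel (ZA A)"

definition vconv :: "(real ^ 'd) measure \<Rightarrow> (real ^ 'd) measure \<Rightarrow> (real ^ 'd) measure" where
  "vconv V1 V2 = distr (V1 \<Otimes>\<^sub>M V2) borel (\<lambda>(x, y). x + y)"

definition tail :: "real measure \<Rightarrow> real \<Rightarrow> real" where
  "tail B x = measure B {x<..}"

definition inf_right_endpoint :: "real measure \<Rightarrow> bool" where
  "inf_right_endpoint B \<longleftrightarrow> (\<forall>x. tail B x > 0)"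

definition classL :: "real measure \<Rightarrow> bool" where
  "classL B \<longleftrightarrow> inf_right_endpoint B \<and>
     (\<forall>y>0. ((\<lambda>x. tail B (x - y) / tail B x) \<longlongrightarrow> 1) at_top)"

fun conv_pow :: "real measure \<Rightarrow> nat \<Rightarrow> real measure" where
  "conv_pow B 0 = return borel 0"
| "conv_pow B (Suc n) = (B \<star> conv_pow B n)"

definition classS :: "real measure \<Rightarrow> bool" where
  "classS B \<longleftrightarrow> inf_right_endpoint B \<and>
     (\<forall>n::nat. n \<ge> 2 \<longrightarrow> ((\<lambda>x. tail (conv_pow B n) x / (real n * tail B x)) \<longlongrightarrow> 1) at_top)"

definition Bstar :: "real measure \<Rightarrow> real \<Rightarrow> ereal" where
  "Bstar B v = Limsup at_top (\<lambda>x. ereal (tail B (v * x) / tail B x))"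

text \<open>K_B^- = - lim_{v -> 1+} log overline{B^*}(v) / log v, with log 0 = -oo
  (so the quotient is +oo when overline{B^*}(v) = 0).\<close>
definition Kminus :: "real measure \<Rightarrow> ereal" where
  "Kminus B = Lim (at_right 1)
     (\<lambda>v. if Bstar B v = 0 then \<infinity> else ereal (- ln (real_of_ereal (Bstar B v)) / ln v))"

definition classAstar :: "real measure \<Rightarrow> bool" where
  "classAstar B \<longleftrightarrow> classS B \<and> Kminus B > 0"

end

theory Submission
  imports Defs
begin


definition nnp :: "real measure \<Rightarrow> bool" where
  "nnp M \<longleftrightarrow> prob_space M \<and> sets M = sets borel \<and> (AE x in M. 0 \<le> x)"

lemma nnpD: assumes "nnp M" shows "prob_space M" "sets M = sets borel" "AE x in M. 0 \<le> x"
  using assms by (auto simp: nnp_def)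

lemma nnp_space: "nnp M \<Longrightarrow> space M = UNIV"
  using sets_eq_imp_space_eq[of M borel] by (auto simp: nnp_def)

lemma pair_rect:
  assumes M: "prob_space M" and N: "prob_space N" and A: "A \<in> sets M" and B: "B \<in> sets N"
  shows "measure (M \<Otimes>\<^sub>M N) {p \<in> space (M \<Otimes>\<^sub>M N). fst p \<in> A \<and> snd p \<in> B} = measure M A * measure N B"
proof -
  interpret M: prob_space M by fact
  interpret N: prob_space N by fact
  interpret pair_sigma_finite M N ..
  have eq: "{p \<in> space (M \<Otimes>\<^sub>M N). fst p \<in> A \<and> snd p \<in> B} = A \<times> B"
    using A B sets.sets_into_space[OF A] sets.sets_into_space[OF B] by (auto simp: space_pair_measure)
  show ?thesis unfolding eq
    using A B by (simp add: measure_def N.emeasure_pair_measure_Times enn2real_mult)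
qed

lemma pair_union_cyl:
  assumes M: "prob_space M" and N: "prob_space N" and A: "A \<in> sets M" and B: "B \<in> sets N"
  shows "measure (M \<Otimes>\<^sub>M N) {p \<in> space (M \<Otimes>\<^sub>M N). fst p \<in> A \<or> snd p \<in> B}
     = measure M A + measure N B - measure M A * measure N B"
proof -
  interpret M: prob_space M by fact
  interpret N: prob_space N by fact
  interpret P: prob_space "M \<Otimes>\<^sub>M N" by (rule prob_space_pair) fact+
  interpret pair_sigma_finite M N ..
  have eq: "{p \<in> space (M \<Otimes>\<^sub>M N). fst p \<in> A \<or> snd p \<in> B} = space (M \<Otimes>\<^sub>M N) - (space M - A) \<times> (space N - B)"
    by (auto simp: space_pair_measure)
  have s: "(space M - A) \<times> (space N - B) \<in> sets (M \<Otimes>\<^sub>M N)" using A B by auto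
  have "measure (M \<Otimes>\<^sub>M N) ((space M - A) \<times> (space N - B)) = measure M (space M - A) * measure N (space N - B)"
    using A B by (simp add: measure_def N.emeasure_pair_measure_Times enn2real_mult)
  also have "\<dots> = (1 - measure M A) * (1 - measure N B)"
    using A B by (simp add: M.prob_compl N.prob_compl)
  finally show ?thesis unfolding eq using P.prob_compl[OF s]
    by (simp add: algebra_simps)
qed

lemma pair_cyl1:
  assumes M: "prob_space M" and N: "prob_space N" and A: "A \<in> sets M"
  shows "measure (M \<Otimes>\<^sub>M N) {p \<in> space (M \<Otimes>\<^sub>M N). fst p \<in> A} = measure M A"
proof -
  have "{p \<in> space (M \<Otimes>\<^sub>M N). fst p \<in> A} = {p \<in> space (M \<Otimes>\<^sub>M N). fst p \<in> A \<and> snd p \<in> space N}"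
    by (auto simp: space_pair_measure)
  then show ?thesis using pair_rect[OF M N A sets.top] prob_space.prob_space[OF N] by simp
qed

lemma pair_cyl2:
  assumes M: "prob_space M" and N: "prob_space N" and B: "B \<in> sets N"
  shows "measure (M \<Otimes>\<^sub>M N) {p \<in> space (M \<Otimes>\<^sub>M N). snd p \<in> B} = measure N B"
proof -
  have "{p \<in> space (M \<Otimes>\<^sub>M N). snd p \<in> B} = {p \<in> space (M \<Otimes>\<^sub>M N). fst p \<in> space M \<and> snd p \<in> B}"
    by (auto simp: space_pair_measure)
  then show ?thesis using pair_rect[OF M N sets.top B] prob_space.prob_space[OF M] by simp
qed

lemma nnp_pair_AE:
  assumes "nnp X" "nnp Y"
  shows "AE p in X \<Otimes>\<^sub>M Y. 0 \<le> fst p \<and> 0 \<le> snd p"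
proof -
  interpret X: prob_space X using assms nnpD by auto
  interpret Y: prob_space Y using assms nnpD by auto
  interpret pair_sigma_finite X Y ..
  have sX[measurable_cong]: "sets X = sets borel" and sY[measurable_cong]: "sets Y = sets borel" using assms nnpD by auto
  have "AE x in X. AE y in Y. 0 \<le> x \<and> 0 \<le> y"
    using nnpD(3)[OF assms(1)] nnpD(3)[OF assms(2)] by (auto elim!: AE_mp)
  then show ?thesis by (subst (asm) AE_pair_iff) auto
qed

lemma tail_conv:
  assumes "nnp X" "nnp Y"
  shows "tail (X \<star> Y) x = measure (X \<Otimes>\<^sub>M Y) {p \<in> space (X \<Otimes>\<^sub>M Y). x < fst p + snd p}"
proof -
  have sX[measurable_cong]: "sets X = sets borel" and sY[measurable_cong]: "sets Y = sets borel" using assms nnpD by auto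
  show ?thesis unfolding tail_def convolution_def
    by (subst measure_distr) (auto intro!: arg_cong[where f="measure _"])
qed



lemma pair_sets_pred:
  assumes "nnp X" "nnp Y" and P: "Measurable.pred (borel \<Otimes>\<^sub>M borel) P"
  shows "{p \<in> space (X \<Otimes>\<^sub>M Y). P p} \<in> sets (X \<Otimes>\<^sub>M Y)"
proof -
  have "sets (X \<Otimes>\<^sub>M Y) = sets (borel \<Otimes>\<^sub>M borel)"
    using assms nnpD by (intro sets_pair_measure_cong) auto
  moreover have "space (X \<Otimes>\<^sub>M Y) = space (borel \<Otimes>\<^sub>M (borel :: real measure))"
    using assms nnp_space by (simp add: space_pair_measure)
  ultimately show ?thesis using P by (simp add: pred_def)
qed

lemma tail_conv_lower:
  assumes X: "nnp X" and Y: "nnp Y"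
  shows "tail X x + tail Y x - tail X x * tail Y x \<le> tail (X \<star> Y) x"
proof -
  interpret X: prob_space X using X nnpD by auto
  interpret Y: prob_space Y using Y nnpD by auto
  interpret P: prob_space "X \<Otimes>\<^sub>M Y" by (rule prob_space_pair) unfold_locales
  have sX: "sets X = sets borel" and sY: "sets Y = sets borel" using assms nnpD by auto
  have "tail X x + tail Y x - tail X x * tail Y x =
     measure (X \<Otimes>\<^sub>M Y) {p \<in> space (X \<Otimes>\<^sub>M Y). fst p \<in> {x<..} \<or> snd p \<in> {x<..}}"
    unfolding tail_def by (rule pair_union_cyl[symmetric]) (auto simp: sX sY X.prob_space_axioms Y.prob_space_axioms)
  also have "\<dots> \<le> measure (X \<Otimes>\<^sub>M Y) {p \<in> space (X \<Otimes>\<^sub>M Y). x < fst p + snd p}"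
    by (rule P.finite_measure_mono_AE[OF _ pair_sets_pred[OF X Y]])
       (use nnp_pair_AE[OF X Y] in \<open>auto elim!: AE_mp\<close>)
  finally show ?thesis using tail_conv[OF X Y] by simp
qed

lemma tail_conv_upper_decomp:
  assumes X: "nnp X" and Y: "nnp Y"
  shows "tail (X \<star> Y) x \<le> tail X (x - h) + tail Y (x - h) +
     measure (X \<Otimes>\<^sub>M Y) {p \<in> space (X \<Otimes>\<^sub>M Y). h < fst p \<and> h < snd p \<and> x < fst p + snd p}"
proof -
  interpret X: prob_space X using X nnpD by auto
  interpret Y: prob_space Y using Y nnpD by auto
  interpret P: prob_space "X \<Otimes>\<^sub>M Y" by (rule prob_space_pair) unfold_locales
  have sX: "sets X = sets borel" and sY: "sets Y = sets borel" using assms nnpD by auto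
  let ?S1 = "{p \<in> space (X \<Otimes>\<^sub>M Y). fst p \<in> {x-h<..}}"
  let ?S2 = "{p \<in> space (X \<Otimes>\<^sub>M Y). snd p \<in> {x-h<..}}"
  let ?U = "{p \<in> space (X \<Otimes>\<^sub>M Y). h < fst p \<and> h < snd p \<and> x < fst p + snd p}"
  have m1: "?S1 \<in> sets (X \<Otimes>\<^sub>M Y)" "?S2 \<in> sets (X \<Otimes>\<^sub>M Y)" "?U \<in> sets (X \<Otimes>\<^sub>M Y)"
    by (auto intro!: pair_sets_pred[OF X Y])
  have "tail (X \<star> Y) x \<le> measure (X \<Otimes>\<^sub>M Y) (?S1 \<union> ?S2 \<union> ?U)"
    unfolding tail_conv[OF X Y] using m1 by (intro P.finite_measure_mono) auto
  also have "\<dots> \<le> measure (X \<Otimes>\<^sub>M Y) ?S1 + measure (X \<Otimes>\<^sub>M Y) ?S2 + measure (X \<Otimes>\<^sub>M Y) ?U"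
    using m1 by (meson measure_Un_le add_right_mono order.trans sets.Un)
  also have "measure (X \<Otimes>\<^sub>M Y) ?S1 = tail X (x - h)"
    unfolding tail_def by (rule pair_cyl1) (auto simp: sX X.prob_space_axioms Y.prob_space_axioms)
  also have "measure (X \<Otimes>\<^sub>M Y) ?S2 = tail Y (x - h)"
    unfolding tail_def by (rule pair_cyl2) (auto simp: sY X.prob_space_axioms Y.prob_space_axioms)
  finally show ?thesis .
qed

lemma tail_conv_U_bound:
  assumes D: "nnp D" and hx: "h \<le> x"
  shows "measure (D \<Otimes>\<^sub>M D) {p \<in> space (D \<Otimes>\<^sub>M D). h < fst p \<and> h < snd p \<and> x < fst p + snd p}
     \<le> tail (D \<star> D) x - 2 * (1 - tail D h) * tail D x"
proof -
  interpret D: prob_space D using D nnpD by auto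
  interpret P: prob_space "D \<Otimes>\<^sub>M D" by (rule prob_space_pair) unfold_locales
  have sD: "sets D = sets borel" using assms nnpD by auto
  let ?U = "{p \<in> space (D \<Otimes>\<^sub>M D). h < fst p \<and> h < snd p \<and> x < fst p + snd p}"
  let ?R1 = "{p \<in> space (D \<Otimes>\<^sub>M D). fst p \<in> {..h} \<and> snd p \<in> {x<..}}"
  let ?R2 = "{p \<in> space (D \<Otimes>\<^sub>M D). fst p \<in> {x<..} \<and> snd p \<in> {..h}}"
  have m: "?U \<in> sets (D \<Otimes>\<^sub>M D)" "?R1 \<in> sets (D \<Otimes>\<^sub>M D)" "?R2 \<in> sets (D \<Otimes>\<^sub>M D)"
    by (auto intro!: pair_sets_pred[OF D D])
  have r1: "measure (D \<Otimes>\<^sub>M D) ?R1 = (1 - tail D h) * tail D x"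
    using pair_rect[of D D "{..h}" "{x<..}"] D.prob_compl[of "{h<..}"]
    by (simp add: sD D.prob_space_axioms tail_def nnp_space[OF D] Compl_eq_Diff_UNIV[symmetric])
  have r2: "measure (D \<Otimes>\<^sub>M D) ?R2 = tail D x * (1 - tail D h)"
    using pair_rect[of D D "{x<..}" "{..h}"] D.prob_compl[of "{h<..}"]
    by (simp add: sD D.prob_space_axioms tail_def nnp_space[OF D] Compl_eq_Diff_UNIV[symmetric])
  have "measure (D \<Otimes>\<^sub>M D) ?U + measure (D \<Otimes>\<^sub>M D) ?R1 + measure (D \<Otimes>\<^sub>M D) ?R2
       = measure (D \<Otimes>\<^sub>M D) (?U \<union> ?R1 \<union> ?R2)"
    using m hx by (subst P.finite_measure_Union; auto)+
  also have "\<dots> \<le> measure (D \<Otimes>\<^sub>M D) {p \<in> space (D \<Otimes>\<^sub>M D). x < fst p + snd p}"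
    by (rule P.finite_measure_mono_AE[OF _ pair_sets_pred[OF D D]])
       (use nnp_pair_AE[OF D D] hx in \<open>auto elim!: AE_mp\<close>)
  finally show ?thesis using r1 r2 tail_conv[OF D D] by (simp add: algebra_simps)
qed

lemma tail_conv_SL_ineq:
  assumes D: "nnp D" and y: "0 \<le> y" "y \<le> x"
  shows "tail D x + (1 - tail D y) * tail D x + (tail D y - tail D x) * tail D (x - y) \<le> tail (D \<star> D) x"
proof -
  interpret D: prob_space D using D nnpD by auto
  interpret P: prob_space "D \<Otimes>\<^sub>M D" by (rule prob_space_pair) unfold_locales
  have sD: "sets D = sets borel" using assms nnpD by auto
  let ?R0 = "{p \<in> space (D \<Otimes>\<^sub>M D). fst p \<in> {x<..}}"
  let ?R1 = "{p \<in> space (D \<Otimes>\<^sub>M D). fst p \<in> {..y} \<and> snd p \<in> {x<..}}"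
  let ?R2 = "{p \<in> space (D \<Otimes>\<^sub>M D). fst p \<in> {y<..x} \<and> snd p \<in> {x-y<..}}"
  have m: "?R0 \<in> sets (D \<Otimes>\<^sub>M D)" "?R1 \<in> sets (D \<Otimes>\<^sub>M D)" "?R2 \<in> sets (D \<Otimes>\<^sub>M D)"
    by (auto intro!: pair_sets_pred[OF D D])
  have r0: "measure (D \<Otimes>\<^sub>M D) ?R0 = tail D x"
    unfolding tail_def by (rule pair_cyl1) (auto simp: sD D.prob_space_axioms)
  have r1: "measure (D \<Otimes>\<^sub>M D) ?R1 = (1 - tail D y) * tail D x"
    using pair_rect[of D D "{..y}" "{x<..}"] D.prob_compl[of "{y<..}"]
    by (simp add: sD D.prob_space_axioms tail_def nnp_space[OF D] Compl_eq_Diff_UNIV[symmetric])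
  have yx: "{y<..x} = {y<..} - {x<..}" using y by auto
  have r2: "measure (D \<Otimes>\<^sub>M D) ?R2 = (tail D y - tail D x) * tail D (x - y)"
    using pair_rect[of D D "{y<..x}" "{x-y<..}"] D.finite_measure_Diff[of "{y<..}" "{x<..}"] y
    by (simp add: sD D.prob_space_axioms tail_def yx)
  have "measure (D \<Otimes>\<^sub>M D) ?R0 + measure (D \<Otimes>\<^sub>M D) ?R1 + measure (D \<Otimes>\<^sub>M D) ?R2
       = measure (D \<Otimes>\<^sub>M D) (?R0 \<union> ?R1 \<union> ?R2)"
    using m y by (subst P.finite_measure_Union; auto)+
  also have "\<dots> \<le> measure (D \<Otimes>\<^sub>M D) {p \<in> space (D \<Otimes>\<^sub>M D). x < fst p + snd p}"
    by (rule P.finite_measure_mono_AE[OF _ pair_sets_pred[OF D D]])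
       (use nnp_pair_AE[OF D D] y in \<open>auto elim!: AE_mp\<close>)
  finally show ?thesis using r0 r1 r2 tail_conv[OF D D] by (simp add: algebra_simps)
qed



lemma upper_set_cases:
  fixes S :: "real set"
  assumes up: "\<And>a b. a \<in> S \<Longrightarrow> a \<le> b \<Longrightarrow> b \<in> S" and sub: "S \<subseteq> {h<..}" and ne: "S \<noteq> {}"
  shows "\<exists>i\<ge>h. S = {i<..} \<or> (h < i \<and> S = {i..})"
proof -
  have bdd: "bdd_below S" using sub by (auto intro!: bdd_belowI[of _ h])
  define i where "i = Inf S"
  have ih: "h \<le> i" unfolding i_def using sub ne by (intro cInf_greatest) auto
  have gt: "b \<in> S" if "i < b" for b
  proof -
    from that obtain a where "a \<in> S" "a < b" unfolding i_def using cInf_less_iff[OF ne bdd] by auto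
    then show ?thesis using up by auto
  qed
  have lt: "b \<notin> S" if "b < i" for b
    using that cInf_lower[OF _ bdd, of b] unfolding i_def by auto
  show ?thesis
  proof (cases "i \<in> S")
    case True
    then have "h < i" using sub by auto
    moreover have "S = {i..}" unfolding set_eq_iff using gt lt True by (metis atLeast_iff le_less not_less)
    ultimately show ?thesis using ih by (intro exI[of _ i]) simp
  next
    case False
    then have "S = {i<..}" unfolding set_eq_iff using gt lt by (metis greaterThan_iff linorder_neqE_linordered_idom)
    then show ?thesis using ih by auto
  qed
qed

lemma meas_upper_compare:
  fixes X D :: "real measure"
  assumes X: "finite_measure X" and D: "finite_measure D"
    and sX: "sets X = sets borel" and sD: "sets D = sets borel"
    and cmp: "\<And>t. h \<le> t \<Longrightarrow> measure X {t<..} \<le> c * measure D {t<..}"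
    and up: "\<And>a b. a \<in> S \<Longrightarrow> a \<le> b \<Longrightarrow> b \<in> S" and sub: "S \<subseteq> {h<..}"
  shows "measure X S \<le> c * measure D S"
proof (cases "S = {}")
  case True then show ?thesis by simp
next
  case False
  interpret X: finite_measure X by fact
  interpret D: finite_measure D by fact
  have "\<exists>i\<ge>h. S = {i<..} \<or> (h < i \<and> S = {i..})" by (rule upper_set_cases[of S h]) (use up sub False in auto)
  then obtain i where i: "h \<le> i" "S = {i<..} \<or> (h < i \<and> S = {i..})" by blast
  show ?thesis
  proof (cases "S = {i<..}")
    case True then show ?thesis using cmp i by simp
  next
    case False
    with i have hi: "h < i" and S: "S = {i..}" by auto
    define A where "A n = {i - (i - h) / real (Suc (Suc n)) <..}" for n
    have A: "range A \<subseteq> sets D" by (auto simp: A_def sD)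
    have dec: "decseq A"
    proof (rule decseq_SucI)
      fix n
      have "(i - h) / real (Suc (Suc (Suc n))) \<le> (i - h) / real (Suc (Suc n))"
        using hi by (intro divide_left_mono) auto
      then show "A (Suc n) \<subseteq> A n" by (auto simp: A_def)
    qed
    have capA: "(\<Inter>n. A n) = {i..}"
    proof (auto simp: A_def)
      fix x assume x: "\<forall>n. i - (i - h) / (2 + real n) < x"
      show "i \<le> x"
      proof (rule ccontr)
        assume "\<not> i \<le> x"
        then have "0 < i - x" by simp
        obtain n :: nat where n: "(i - h) / (i - x) < real n" using reals_Archimedean2 by blast
        then have "(i - h) < real n * (i - x)" using \<open>0 < i - x\<close> by (simp add: field_simps)
        also have "\<dots> \<le> (2 + real n) * (i - x)" using \<open>0 < i - x\<close> by (intro mult_right_mono) auto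
        finally have "(i - h) / (2 + real n) < i - x" by (simp add: field_simps)
        with x[rule_format, of n] show False by simp
      qed
    next
      fix x n assume "i \<le> x"
      have "0 < (i - h) / (2 + real n)" using hi by auto
      then show "i - (i - h) / (2 + real n) < x" using \<open>i \<le> x\<close> by simp
    qed
    have lim: "(\<lambda>n. c * measure D (A n)) \<longlonglongrightarrow> c * measure D {i..}"
      using D.finite_Lim_measure_decseq[OF A dec] capA by (auto intro!: tendsto_mult)
    have le: "measure X {i..} \<le> c * measure D (A n)" for n
    proof -
      have t: "h \<le> i - (i - h) / real (Suc (Suc n))"
      proof -
        have "(i - h) / real (Suc (Suc n)) \<le> (i - h) / 1" using hi by (intro divide_left_mono) auto
        then show ?thesis by simp
      qed
      have "measure X {i..} \<le> measure X (A n)"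
      proof -
        have pos: "0 < (i - h) / real (Suc (Suc n))" using hi by simp
        have "{i..} \<subseteq> A n" unfolding A_def using pos by auto
        then show ?thesis by (intro X.finite_measure_mono) (auto simp: A_def sX)
      qed
      also have "\<dots> \<le> c * measure D (A n)" unfolding A_def by (rule cmp[OF t])
      finally show ?thesis .
    qed
    show ?thesis unfolding S by (rule LIMSEQ_le_const[OF lim]) (use le in auto)
  qed
qed

lemma layer_cake:
  fixes M :: "'a measure" and f :: "'a \<Rightarrow> real"
  assumes M: "sigma_finite_measure M" and f[measurable]: "f \<in> borel_measurable M" and nn: "\<And>x. 0 \<le> f x"
  shows "(\<integral>\<^sup>+x. ennreal (f x) \<partial>M) = (\<integral>\<^sup>+s. indicator {0..} s * emeasure M {x \<in> space M. s < f x} \<partial>lborel)"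
proof -
  interpret M: sigma_finite_measure M by fact
  interpret pair_sigma_finite M lborel ..
  have "(\<integral>\<^sup>+x. ennreal (f x) \<partial>M) = (\<integral>\<^sup>+x. \<integral>\<^sup>+s. indicator {0..<f x} s \<partial>lborel \<partial>M)"
    using nn by (intro nn_integral_cong) simp
  also have "\<dots> = (\<integral>\<^sup>+x. \<integral>\<^sup>+s. (\<lambda>(x,s). indicator {0..<f x} s) (x, s) \<partial>lborel \<partial>M)" by simp
  also have "\<dots> = (\<integral>\<^sup>+s. \<integral>\<^sup>+x. (\<lambda>(x,s). indicator {0..<f x} s) (x, s) \<partial>M \<partial>lborel)"
  proof (rule Fubini[symmetric])
    have "Measurable.pred (M \<Otimes>\<^sub>M lborel) (\<lambda>p. 0 \<le> snd p \<and> snd p < f (fst p))" by measurable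
    then show "(\<lambda>(x, s). indicator {0..<f x} s :: ennreal) \<in> borel_measurable (M \<Otimes>\<^sub>M lborel)"
      by (subst measurable_cong[where g="\<lambda>p. indicator {p. 0 \<le> snd p \<and> snd p < f (fst p)} p"])
         (auto simp: indicator_def split: prod.splits simp: pred_def space_pair_measure)
  qed
  also have "\<dots> = (\<integral>\<^sup>+s. indicator {0..} s * emeasure M {x \<in> space M. s < f x} \<partial>lborel)"
  proof (rule nn_integral_cong)
    fix s :: real
    have "(\<integral>\<^sup>+x. (\<lambda>(x,s). indicator {0..<f x} s) (x, s) \<partial>M) = (\<integral>\<^sup>+x. indicator {0..} s * indicator {x \<in> space M. s < f x} x \<partial>M)"
      by (intro nn_integral_cong) (auto simp: indicator_def)
    also have "\<dots> = indicator {0..} s * emeasure M {x \<in> space M. s < f x}"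
      by (intro nn_integral_cmult_indicator) measurable
    finally show "(\<integral>\<^sup>+x. (\<lambda>(x,s). indicator {0..<f x} s) (x, s) \<partial>M) = indicator {0..} s * emeasure M {x \<in> space M. s < f x}" .
  qed
  finally show ?thesis .
qed

lemma nn_integral_mono_compare:
  fixes X D :: "real measure" and \<psi> :: "real \<Rightarrow> real"
  assumes X: "finite_measure X" and D: "finite_measure D"
    and sX: "sets X = sets borel" and sD: "sets D = sets borel"
    and c: "0 \<le> c"
    and cmp: "\<And>t. h \<le> t \<Longrightarrow> measure X {t<..} \<le> c * measure D {t<..}"
    and \<psi>m: "\<psi> \<in> borel_measurable borel" and \<psi>mono: "mono \<psi>" and \<psi>nn: "\<And>a. 0 \<le> \<psi> a"
    and \<psi>0: "\<And>a. a \<le> h \<Longrightarrow> \<psi> a = 0"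
  shows "(\<integral>\<^sup>+a. ennreal (\<psi> a) \<partial>X) \<le> ennreal c * (\<integral>\<^sup>+a. ennreal (\<psi> a) \<partial>D)"
proof -
  interpret X: finite_measure X by fact
  interpret D: finite_measure D by fact
  have spX: "space X = UNIV" and spD: "space D = UNIV"
    using sets_eq_imp_space_eq[OF sX] sets_eq_imp_space_eq[OF sD] by auto
  have mX: "\<psi> \<in> borel_measurable X" and mD: "\<psi> \<in> borel_measurable D"
    using \<psi>m by (auto simp: measurable_def sX sD spX spD)
  have "(\<integral>\<^sup>+a. ennreal (\<psi> a) \<partial>X) = (\<integral>\<^sup>+s. indicator {0..} s * emeasure X {x \<in> space X. s < \<psi> x} \<partial>lborel)"
    by (rule layer_cake[OF _ mX \<psi>nn]) unfold_locales
  also have "\<dots> \<le> (\<integral>\<^sup>+s. ennreal c * (indicator {0..} s * emeasure D {x \<in> space D. s < \<psi> x}) \<partial>lborel)"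
  proof (rule nn_integral_mono)
    fix s :: real
    show "indicator {0..} s * emeasure X {x \<in> space X. s < \<psi> x} \<le> ennreal c * (indicator {0..} s * emeasure D {x \<in> space D. s < \<psi> x})"
    proof (cases "0 \<le> s")
      case True
      let ?S = "{x. s < \<psi> x}"
      have Sm: "?S \<in> sets borel" using \<psi>m by measurable
      have "measure X ?S \<le> c * measure D ?S"
      proof (rule meas_upper_compare[OF X D sX sD cmp])
        show "b \<in> ?S" if "a \<in> ?S" "a \<le> b" for a b using that \<psi>mono by (auto dest: monoD[of _ a b])
        show "?S \<subseteq> {h<..}"
        proof
          fix x assume "x \<in> ?S"
          show "x \<in> {h<..}"
          proof (rule ccontr)
            assume "x \<notin> {h<..}"
            then have "\<psi> x = 0" using \<psi>0 by auto
            with \<open>x \<in> ?S\<close> True show False by simp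
          qed
        qed
      qed auto
      then have "emeasure X ?S \<le> ennreal c * emeasure D ?S"
        using Sm c by (simp add: X.emeasure_eq_measure D.emeasure_eq_measure sX sD ennreal_mult[symmetric])
      then show ?thesis using True by (simp add: spX spD)
    qed simp
  qed
  also have "\<dots> = ennreal c * (\<integral>\<^sup>+s. indicator {0..} s * emeasure D {x \<in> space D. s < \<psi> x} \<partial>lborel)"
    by (rule nn_integral_cmult) (measurable, use mD in simp)
  also have "(\<integral>\<^sup>+s. indicator {0..} s * emeasure D {x \<in> space D. s < \<psi> x} \<partial>lborel) = (\<integral>\<^sup>+a. ennreal (\<psi> a) \<partial>D)"
    by (rule layer_cake[OF _ mD \<psi>nn, symmetric]) unfold_locales
  finally show ?thesis .
qed



lemma tail_antimono:
  assumes "nnp Z" "x \<le> y" shows "tail Z y \<le> tail Z x"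
proof -
  interpret Z: prob_space Z using assms nnpD by auto
  show ?thesis unfolding tail_def using assms nnpD by (intro Z.finite_measure_mono) auto
qed

lemma tail_nonneg: "0 \<le> tail Z x" by (simp add: tail_def)

lemma tail_le1: assumes "nnp Z" shows "tail Z x \<le> 1"
proof -
  interpret Z: prob_space Z using assms nnpD by auto
  show ?thesis unfolding tail_def by simp
qed

lemma pair_U_integral:
  assumes X: "nnp X" and Y: "nnp Y"
  shows "emeasure (X \<Otimes>\<^sub>M Y) {p \<in> space (X \<Otimes>\<^sub>M Y). h < fst p \<and> h < snd p \<and> x < fst p + snd p}
    = (\<integral>\<^sup>+a. ennreal (if h < a then tail Y (max h (x - a)) else 0) \<partial>X)"
proof -
  interpret X: prob_space X using X nnpD by auto
  interpret Y: prob_space Y using Y nnpD by auto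
  have sY: "sets Y = sets borel" using Y nnpD by auto
  let ?U = "{p \<in> space (X \<Otimes>\<^sub>M Y). h < fst p \<and> h < snd p \<and> x < fst p + snd p}"
  have U: "?U \<in> sets (X \<Otimes>\<^sub>M Y)" by (rule pair_sets_pred[OF X Y]) measurable
  have "emeasure (X \<Otimes>\<^sub>M Y) ?U = (\<integral>\<^sup>+a. emeasure Y (Pair a -` ?U) \<partial>X)"
    by (rule Y.emeasure_pair_measure_alt[OF U])
  also have "\<dots> = (\<integral>\<^sup>+a. ennreal (if h < a then tail Y (max h (x - a)) else 0) \<partial>X)"
  proof (rule nn_integral_cong)
    fix a
    have "Pair a -` ?U = (if h < a then {max h (x - a)<..} else {})"
      using nnp_space[OF X] nnp_space[OF Y] by (auto simp: space_pair_measure)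
    then show "emeasure Y (Pair a -` ?U) = ennreal (if h < a then tail Y (max h (x - a)) else 0)"
      by (simp add: tail_def Y.emeasure_eq_measure)
  qed
  finally show ?thesis .
qed

lemma U_compare:
  assumes X: "nnp X" and Y: "nnp Y" and D: "nnp D" and c: "0 \<le> c" and c': "0 \<le> c'"
    and cX: "\<And>t. h \<le> t \<Longrightarrow> tail X t \<le> c * tail D t"
    and cY: "\<And>t. h \<le> t \<Longrightarrow> tail Y t \<le> c' * tail D t"
  shows "measure (X \<Otimes>\<^sub>M Y) {p \<in> space (X \<Otimes>\<^sub>M Y). h < fst p \<and> h < snd p \<and> x < fst p + snd p}
     \<le> c * c' * measure (D \<Otimes>\<^sub>M D) {p \<in> space (D \<Otimes>\<^sub>M D). h < fst p \<and> h < snd p \<and> x < fst p + snd p}"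
proof -
  interpret X: prob_space X using X nnpD by auto
  interpret Y: prob_space Y using Y nnpD by auto
  interpret D: prob_space D using D nnpD by auto
  interpret P1: prob_space "X \<Otimes>\<^sub>M Y" by (rule prob_space_pair) unfold_locales
  interpret P2: prob_space "D \<Otimes>\<^sub>M D" by (rule prob_space_pair) unfold_locales
  have sX: "sets X = sets borel" and sY: "sets Y = sets borel" and sD: "sets D = sets borel" using assms nnpD by auto
  define \<psi> where "\<psi> a = (if h < a then tail D (max h (x - a)) else 0)" for a
  have \<psi>mono: "mono \<psi>"
  proof (rule monoI)
    fix a b :: real assume "a \<le> b"
    then show "\<psi> a \<le> \<psi> b" unfolding \<psi>_def using tail_antimono[OF D] by (auto simp: tail_nonneg)
  qed
  have \<psi>m: "\<psi> \<in> borel_measurable borel" by (rule borel_measurable_mono[OF \<psi>mono])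
  let ?U1 = "{p \<in> space (X \<Otimes>\<^sub>M Y). h < fst p \<and> h < snd p \<and> x < fst p + snd p}"
  let ?U2 = "{p \<in> space (D \<Otimes>\<^sub>M D). h < fst p \<and> h < snd p \<and> x < fst p + snd p}"
  have "emeasure (X \<Otimes>\<^sub>M Y) ?U1 = (\<integral>\<^sup>+a. ennreal (if h < a then tail Y (max h (x - a)) else 0) \<partial>X)"
    by (rule pair_U_integral[OF X Y])
  also have "\<dots> \<le> (\<integral>\<^sup>+a. ennreal c' * ennreal (\<psi> a) \<partial>X)"
  proof (intro nn_integral_mono)
    fix a
    have "ennreal (if h < a then tail Y (max h (x - a)) else 0) \<le> ennreal (c' * \<psi> a)"
      unfolding \<psi>_def by (intro ennreal_leI) (auto intro!: cY)
    then show "ennreal (if h < a then tail Y (max h (x - a)) else 0) \<le> ennreal c' * ennreal (\<psi> a)"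
      by (simp add: ennreal_mult[symmetric] c' \<psi>_def tail_nonneg)
  qed
  also have "\<dots> = ennreal c' * (\<integral>\<^sup>+a. ennreal (\<psi> a) \<partial>X)"
  proof (rule nn_integral_cmult)
    have \<psi>X: "\<psi> \<in> borel_measurable X" using \<psi>m by (subst measurable_cong_sets[OF sX refl])
    show "(\<lambda>a. ennreal (\<psi> a)) \<in> borel_measurable X" using \<psi>X by measurable
  qed
  also have "(\<integral>\<^sup>+a. ennreal (\<psi> a) \<partial>X) \<le> ennreal c * (\<integral>\<^sup>+a. ennreal (\<psi> a) \<partial>D)"
    by (rule nn_integral_mono_compare[where h=h, OF _ _ sX sD c _ \<psi>m \<psi>mono])
       (auto simp: \<psi>_def tail_nonneg cX[unfolded tail_def] X.finite_measure_axioms D.finite_measure_axioms)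
  also have "(\<integral>\<^sup>+a. ennreal (\<psi> a) \<partial>D) = emeasure (D \<Otimes>\<^sub>M D) ?U2"
    unfolding \<psi>_def by (rule pair_U_integral[OF D D, symmetric])
  finally have "ennreal (measure (X \<Otimes>\<^sub>M Y) ?U1) \<le> ennreal (c * c' * measure (D \<Otimes>\<^sub>M D) ?U2)"
    by (simp add: P1.emeasure_eq_measure P2.emeasure_eq_measure ennreal_mult'[symmetric] c c' mult_mono
         ennreal_mult[symmetric] mult.assoc mult.left_commute mult_left_mono ac_simps)
  then show ?thesis using c c' by (subst (asm) ennreal_le_iff) auto
qed



lemma prob_fin: "prob_space M \<Longrightarrow> finite_measure M" by (simp add: prob_space_def)

lemma tail_tendsto_0:
  assumes Z: "nnp Z" shows "(tail Z \<longlongrightarrow> 0) at_top"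
proof -
  interpret Z: prob_space Z using Z nnpD by auto
  have sZ: "sets Z = sets borel" using Z nnpD by auto
  have dec: "decseq (\<lambda>n::nat. {real n<..})" by (auto simp: decseq_def)
  have "(\<lambda>n. measure Z {real n<..}) \<longlonglongrightarrow> measure Z (\<Inter>n. {real n<..})"
    by (rule Z.finite_Lim_measure_decseq[OF _ dec]) (auto simp: sZ)
  moreover have "(\<Inter>n. {real n<..}) = ({} :: real set)"
    by (auto simp: not_less) (meson reals_Archimedean2 less_asym)
  ultimately have seq: "(\<lambda>n. tail Z (real n)) \<longlonglongrightarrow> 0" by (simp add: tail_def)
  have up: "((\<lambda>x. tail Z (real (nat \<lfloor>x\<rfloor>))) \<longlongrightarrow> 0) at_top"
    by (rule filterlim_compose[OF seq]) (intro filterlim_compose[OF filterlim_nat_sequentially] filterlim_floor_sequentially)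
  show ?thesis
  proof (rule tendsto_sandwich[OF _ _ tendsto_const up])
    show "\<forall>\<^sub>F x in at_top. 0 \<le> tail Z x" by (simp add: tail_def)
    show "\<forall>\<^sub>F x in at_top. tail Z x \<le> tail Z (real (nat \<lfloor>x\<rfloor>))"
      using eventually_ge_at_top[of 0]
    proof eventually_elim
      case (elim x)
      then have "real (nat \<lfloor>x\<rfloor>) \<le> x" by linarith
      then show ?case unfolding tail_def by (intro Z.finite_measure_mono) (auto simp: sZ)
    qed
  qed
qed

lemma conv_return:
  assumes "finite_measure M" "sets M = sets borel"
  shows "M \<star> return borel (0::real) = M"
proof (rule measure_eqI)
  show "sets (M \<star> return borel 0) = sets M" using assms by simp
next
  fix A assume A: "A \<in> sets (M \<star> return borel 0)"
  then have Ab: "A \<in> sets borel" by simp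
  have "emeasure (M \<star> return borel 0) A = \<integral>\<^sup>+x. \<integral>\<^sup>+y. indicator A (x + y) \<partial>return borel 0 \<partial>M"
    using assms Ab by (intro convolution_emeasure') (auto intro!: prob_fin prob_space_return)
  also have "\<dots> = \<integral>\<^sup>+x. indicator A x \<partial>M"
    using Ab by (intro nn_integral_cong) (simp add: nn_integral_return)
  also have "\<dots> = emeasure M A" using Ab assms by simp
  finally show "emeasure (M \<star> return borel 0) A = emeasure M A" .
qed

lemma nnp_conv:
  assumes X: "nnp X" and Y: "nnp Y" shows "nnp (X \<star> Y)"
proof -
  interpret X: prob_space X using X nnpD by auto
  interpret Y: prob_space Y using Y nnpD by auto
  interpret P: prob_space "X \<Otimes>\<^sub>M Y" by (rule prob_space_pair) unfold_locales
  have sX[measurable_cong]: "sets X = sets borel" and sY[measurable_cong]: "sets Y = sets borel" using assms nnpD by auto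
  have m: "(\<lambda>(x, y). x + y :: real) \<in> measurable (X \<Otimes>\<^sub>M Y) borel" by measurable
  have "prob_space (X \<star> Y)" unfolding convolution_def by (rule P.prob_space_distr[OF m])
  moreover have "AE z in X \<star> Y. 0 \<le> z"
    unfolding convolution_def
    by (subst AE_distr_iff[OF m]) (use nnp_pair_AE[OF X Y] in \<open>auto elim!: AE_mp\<close>)
  ultimately show ?thesis by (simp add: nnp_def)
qed

lemma nnp_conv_pow:
  assumes "nnp E" shows "nnp (conv_pow E (Suc n))"
proof (induction n)
  case 0
  have "conv_pow E (Suc 0) = E" using assms nnpD
    by (simp add: conv_return prob_fin)
  then show ?case using assms by simp
next
  case (Suc n)
  then show ?case using nnp_conv[OF assms] by simp
qed

lemma conv_pow_one:
  assumes "nnp E" shows "conv_pow E (Suc 0) = E"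
  using assms nnpD by (simp add: conv_return prob_fin)



definition S2 :: "real measure \<Rightarrow> bool" where
  "S2 D \<longleftrightarrow> ((\<lambda>x. tail (D \<star> D) x / tail D x) \<longlongrightarrow> 2) at_top"

lemma S_imp_L:
  assumes D: "nnp D" and pos: "\<And>x. 0 < tail D x" and S: "S2 D" and y: "0 < y"
  shows "((\<lambda>x. tail D (x - y) / tail D x) \<longlongrightarrow> 1) at_top"
proof (rule tendsto_sandwich)
  let ?u = "\<lambda>x. (tail (D \<star> D) x / tail D x - 2 + tail D y) / (tail D y - tail D x)"
  show "\<forall>\<^sub>F x in at_top. 1 \<le> tail D (x - y) / tail D x"
    using pos tail_antimono[OF D, of "x - y" x for x] y by (auto simp: field_simps)
  have "((\<lambda>x. tail D y - tail D x) \<longlongrightarrow> tail D y - 0) at_top"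
    by (intro tendsto_diff tendsto_const tail_tendsto_0[OF D])
  then have ev: "\<forall>\<^sub>F x in at_top. 0 < tail D y - tail D x"
    using pos[of y] by (auto dest: order_tendstoD)
  show "\<forall>\<^sub>F x in at_top. tail D (x - y) / tail D x \<le> ?u x"
    using ev eventually_ge_at_top[of y]
  proof eventually_elim
    case (elim x)
    have a: "0 < tail D x" by (rule pos)
    have ineq: "tail D x + (1 - tail D y) * tail D x + (tail D y - tail D x) * tail D (x - y) \<le> tail (D \<star> D) x"
      by (rule tail_conv_SL_ineq[OF D]) (use y elim in auto)
    then have i2: "(tail D y - tail D x) * tail D (x - y) \<le> tail (D \<star> D) x - 2 * tail D x + tail D y * tail D x"
      by (simp add: algebra_simps)
    have "(tail D y - tail D x) * (tail D (x - y) / tail D x) = (tail D y - tail D x) * tail D (x - y) / tail D x"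
      by simp
    also have "\<dots> \<le> (tail (D \<star> D) x - 2 * tail D x + tail D y * tail D x) / tail D x"
      using i2 a by (intro divide_right_mono) auto
    also have "\<dots> = tail (D \<star> D) x / tail D x - 2 + tail D y"
      using a by (simp add: add_divide_distrib diff_divide_distrib)
    finally have "(tail D y - tail D x) * (tail D (x - y) / tail D x) \<le> tail (D \<star> D) x / tail D x - 2 + tail D y" .
    then show ?case using elim(1) by (simp add: pos_le_divide_eq mult.commute)
  qed
  have "((\<lambda>x. (tail (D \<star> D) x / tail D x - 2 + tail D y) / (tail D y - tail D x)) \<longlongrightarrow> (2 - 2 + tail D y) / (tail D y - 0)) at_top"
    using S pos[of y] unfolding S2_def
    by (intro tendsto_intros tail_tendsto_0[OF D]) auto
  then show "(?u \<longlongrightarrow> 1) at_top" using pos[of y] by simp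
qed (rule tendsto_const)



lemma shift_at_top: "filterlim (\<lambda>x::real. x - h) at_top at_top"
  using filterlim_tendsto_add_at_top[OF tendsto_const filterlim_ident, of "-h"] by simp

lemma ratio_bound:
  fixes f g :: "real \<Rightarrow> real"
  assumes "((\<lambda>x. f x / g x) \<longlongrightarrow> \<alpha>) at_top" and "\<And>x. 0 < g x"
  shows "\<exists>H. \<forall>t\<ge>H. f t \<le> (\<alpha> + 1) * g t"
proof -
  have "\<forall>\<^sub>F x in at_top. f x / g x < \<alpha> + 1" by (rule order_tendstoD(2)[OF assms(1)]) simp
  then obtain H where H: "\<And>t. t \<ge> H \<Longrightarrow> f t / g t < \<alpha> + 1" by (auto simp: eventually_at_top_linorder)
  show ?thesis
  proof (intro exI allI impI)
    fix t assume "H \<le> t"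
    with H have "f t / g t < \<alpha> + 1" by auto
    then show "f t \<le> (\<alpha> + 1) * g t" using assms(2)[of t] by (simp add: divide_less_eq)
  qed
qed

lemma tail_conv_upper:
  assumes X: "nnp X" and Y: "nnp Y" and D: "nnp D" and c: "0 \<le> c" and c': "0 \<le> c'" and hx: "h \<le> x"
    and cX: "\<And>t. h \<le> t \<Longrightarrow> tail X t \<le> c * tail D t"
    and cY: "\<And>t. h \<le> t \<Longrightarrow> tail Y t \<le> c' * tail D t"
  shows "tail (X \<star> Y) x \<le> tail X (x - h) + tail Y (x - h) + c * c' * (tail (D \<star> D) x - 2 * (1 - tail D h) * tail D x)"
proof -
  have "tail (X \<star> Y) x \<le> tail X (x - h) + tail Y (x - h) +
     measure (X \<Otimes>\<^sub>M Y) {p \<in> space (X \<Otimes>\<^sub>M Y). h < fst p \<and> h < snd p \<and> x < fst p + snd p}"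
    by (rule tail_conv_upper_decomp[OF X Y])
  also have "measure (X \<Otimes>\<^sub>M Y) {p \<in> space (X \<Otimes>\<^sub>M Y). h < fst p \<and> h < snd p \<and> x < fst p + snd p}
     \<le> c * c' * measure (D \<Otimes>\<^sub>M D) {p \<in> space (D \<Otimes>\<^sub>M D). h < fst p \<and> h < snd p \<and> x < fst p + snd p}"
    by (rule U_compare[OF X Y D c c' cX cY])
  also have "\<dots> \<le> c * c' * (tail (D \<star> D) x - 2 * (1 - tail D h) * tail D x)"
    using c c' by (intro mult_left_mono tail_conv_U_bound[OF D hx]) auto
  finally show ?thesis by simp
qed

lemma sum_asym:
  assumes X: "nnp X" and Y: "nnp Y" and D: "nnp D" and pos: "\<And>x. 0 < tail D x" and S: "S2 D"
    and a: "((\<lambda>x. tail X x / tail D x) \<longlongrightarrow> \<alpha>) at_top"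
    and b: "((\<lambda>x. tail Y x / tail D x) \<longlongrightarrow> \<beta>) at_top"
  shows "((\<lambda>x. tail (X \<star> Y) x / tail D x) \<longlongrightarrow> \<alpha> + \<beta>) at_top"
proof (rule order_tendstoI)
  have \<alpha>0: "0 \<le> \<alpha>" by (rule tendsto_lowerbound[OF a]) (auto simp: tail_nonneg pos less_imp_le)
  have \<beta>0: "0 \<le> \<beta>" by (rule tendsto_lowerbound[OF b]) (auto simp: tail_nonneg pos less_imp_le)
  fix a' assume a': "a' < \<alpha> + \<beta>"
  let ?l = "\<lambda>x. tail X x / tail D x + tail Y x / tail D x - tail X x / tail D x * tail Y x"
  have "(?l \<longlongrightarrow> \<alpha> + \<beta> - \<alpha> * 0) at_top"
    by (intro tendsto_intros a b tail_tendsto_0[OF Y])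
  then have "\<forall>\<^sub>F x in at_top. a' < ?l x" using a' by (auto dest: order_tendstoD)
  then show "\<forall>\<^sub>F x in at_top. a' < tail (X \<star> Y) x / tail D x"
  proof eventually_elim
    case (elim x)
    have "tail X x + tail Y x - tail X x * tail Y x \<le> tail (X \<star> Y) x" by (rule tail_conv_lower[OF X Y])
    then have "(tail X x + tail Y x - tail X x * tail Y x) / tail D x \<le> tail (X \<star> Y) x / tail D x"
      using pos[of x] by (intro divide_right_mono) auto
    moreover have "(tail X x + tail Y x - tail X x * tail Y x) / tail D x = ?l x"
      by (simp add: add_divide_distrib diff_divide_distrib)
    ultimately have "?l x \<le> tail (X \<star> Y) x / tail D x" by simp
    then show ?case using elim by simp
  qed
next
  have \<alpha>0: "0 \<le> \<alpha>" by (rule tendsto_lowerbound[OF a]) (auto simp: tail_nonneg pos less_imp_le)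
  have \<beta>0: "0 \<le> \<beta>" by (rule tendsto_lowerbound[OF b]) (auto simp: tail_nonneg pos less_imp_le)
  fix b' assume b': "\<alpha> + \<beta> < b'"
  define K where "K = (\<alpha> + 1) * (\<beta> + 1)"
  have K: "0 < K" using \<alpha>0 \<beta>0 by (simp add: K_def)
  define \<delta> where "\<delta> = b' - (\<alpha> + \<beta>)"
  have \<delta>: "0 < \<delta>" using b' by (simp add: \<delta>_def)
  obtain HX where HX: "\<And>t. t \<ge> HX \<Longrightarrow> tail X t \<le> (\<alpha> + 1) * tail D t" using ratio_bound[OF a pos] by blast
  obtain HY where HY: "\<And>t. t \<ge> HY \<Longrightarrow> tail Y t \<le> (\<beta> + 1) * tail D t" using ratio_bound[OF b pos] by blast
  have "\<forall>\<^sub>F x in at_top. tail D x < \<delta> / (4 * K)"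
    by (rule order_tendstoD(2)[OF tail_tendsto_0[OF D]]) (use \<delta> K in simp)
  then obtain H0 where H0: "\<And>t. t \<ge> H0 \<Longrightarrow> tail D t < \<delta> / (4 * K)" by (auto simp: eventually_at_top_linorder)
  define h where "h = max (max HX HY) (max H0 1)"
  have h: "0 < h" "HX \<le> h" "HY \<le> h" "H0 \<le> h" by (auto simp: h_def)
  have Dh: "tail D h < \<delta> / (4 * K)" using H0 h by auto
  let ?w = "\<lambda>x. (tail X (x - h) / tail D (x - h)) * (tail D (x - h) / tail D x)
     + (tail Y (x - h) / tail D (x - h)) * (tail D (x - h) / tail D x)
     + K * (tail (D \<star> D) x / tail D x - 2 * (1 - tail D h))"
  have L: "((\<lambda>x. tail D (x - h) / tail D x) \<longlongrightarrow> 1) at_top" by (rule S_imp_L[OF D pos S h(1)])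
  have aa: "((\<lambda>x. tail X (x - h) / tail D (x - h)) \<longlongrightarrow> \<alpha>) at_top"
    by (rule filterlim_compose[OF a shift_at_top])
  have bb: "((\<lambda>x. tail Y (x - h) / tail D (x - h)) \<longlongrightarrow> \<beta>) at_top"
    by (rule filterlim_compose[OF b shift_at_top])
  have "(?w \<longlongrightarrow> \<alpha> * 1 + \<beta> * 1 + K * (2 - 2 * (1 - tail D h))) at_top"
    using S unfolding S2_def by (intro tendsto_intros aa bb L) auto
  moreover have "\<alpha> * 1 + \<beta> * 1 + K * (2 - 2 * (1 - tail D h)) < b'"
  proof -
    have "K * (2 - 2 * (1 - tail D h)) = 2 * (K * tail D h)" by (simp add: algebra_simps)
    also have "K * tail D h < K * (\<delta> / (4 * K))" by (rule mult_strict_left_mono[OF Dh K])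
    also have "K * (\<delta> / (4 * K)) = \<delta> / 4" using K by simp
    finally show ?thesis using \<delta> by (simp add: \<delta>_def)
  qed
  ultimately have ev: "\<forall>\<^sub>F x in at_top. ?w x < b'" by (rule order_tendstoD(2))
  show "\<forall>\<^sub>F x in at_top. tail (X \<star> Y) x / tail D x < b'"
    using ev eventually_ge_at_top[of h]
  proof eventually_elim
    case (elim x)
    have up: "tail (X \<star> Y) x \<le> tail X (x - h) + tail Y (x - h) + (\<alpha> + 1) * (\<beta> + 1) * (tail (D \<star> D) x - 2 * (1 - tail D h) * tail D x)"
      by (rule tail_conv_upper[OF X Y D _ _ elim(2)]) (use \<alpha>0 \<beta>0 HX HY h in auto)
    have p1: "0 < tail D x" "0 < tail D (x - h)" using pos by auto
    have "?w x = (tail X (x - h) + tail Y (x - h) + K * (tail (D \<star> D) x - 2 * (1 - tail D h) * tail D x)) / tail D x"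
      using p1 by (simp add: field_simps)
    also have "\<dots> \<ge> tail (X \<star> Y) x / tail D x"
      using up p1 by (intro divide_right_mono) (auto simp: K_def)
    finally show ?case using elim(1) by simp
  qed
qed



lemma classS_S2:
  assumes D: "nnp D" and S: "classS D" shows "S2 D"
proof -
  have c2: "conv_pow D 2 = (D \<star> D)" using conv_pow_one[OF D] by (simp add: numeral_2_eq_2)
  have "((\<lambda>x. tail (conv_pow D 2) x / (real 2 * tail D x)) \<longlongrightarrow> 1) at_top"
    using S unfolding classS_def by auto
  then have "((\<lambda>x. 2 * (tail (conv_pow D 2) x / (real 2 * tail D x))) \<longlongrightarrow> 2 * 1) at_top"
    by (intro tendsto_intros)
  then show ?thesis unfolding S2_def c2 by simp
qed

lemma equiv_S:
  assumes E: "nnp E" and D: "nnp D" and posE: "\<And>x. 0 < tail E x" and posD: "\<And>x. 0 < tail D x"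
    and S: "S2 D" and r: "((\<lambda>x. tail E x / tail D x) \<longlongrightarrow> 1) at_top"
  shows "classS E"
proof -
  have claim: "((\<lambda>x. tail (conv_pow E (Suc n)) x / tail D x) \<longlongrightarrow> real (Suc n)) at_top" for n
  proof (induction n)
    case 0 then show ?case using r conv_pow_one[OF E] by simp
  next
    case (Suc n)
    have "((\<lambda>x. tail (E \<star> conv_pow E (Suc n)) x / tail D x) \<longlongrightarrow> 1 + real (Suc n)) at_top"
      by (rule sum_asym[OF E nnp_conv_pow[OF E] D posD S r Suc])
    then show ?case by simp
  qed
  have "((\<lambda>x. tail (conv_pow E n) x / (real n * tail E x)) \<longlongrightarrow> 1) at_top" if n: "n \<ge> 2" for n
  proof -
    obtain m where m: "n = Suc m" using n by (cases n) auto
    have lim: "((\<lambda>x. (tail (conv_pow E n) x / tail D x) / (real n * (tail E x / tail D x))) \<longlongrightarrow> real n / (real n * 1)) at_top"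
      unfolding m by (intro tendsto_intros claim r) auto
    have "(tail (conv_pow E n) x / tail D x) / (real n * (tail E x / tail D x)) = tail (conv_pow E n) x / (real n * tail E x)" for x
      using posD[of x] posE[of x] by (simp add: field_simps)
    then have eqf: "(\<lambda>x. (tail (conv_pow E n) x / tail D x) / (real n * (tail E x / tail D x))) = (\<lambda>x. tail (conv_pow E n) x / (real n * tail E x))"
      by (intro ext)
    have one: "real n / (real n * 1) = 1" using n by simp
    show ?thesis using lim unfolding eqf one .
  qed
  then show ?thesis unfolding classS_def inf_right_endpoint_def using posE by auto
qed

lemma Limsup_mult_tendsto1:
  fixes f q :: "real \<Rightarrow> real"
  assumes f: "\<forall>\<^sub>F x in at_top. 0 \<le> f x \<and> f x \<le> 1" and q: "(q \<longlongrightarrow> 1) at_top"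
  shows "Limsup at_top (\<lambda>x. ereal (f x * q x)) \<le> Limsup at_top (\<lambda>x. ereal (f x))"
proof -
  let ?L = "Limsup at_top (\<lambda>x. ereal (f x))"
  have "\<forall>y>?L. \<forall>\<^sub>F x in at_top. ereal (f x * q x) < y"
  proof (intro allI impI)
    fix y assume y: "?L < y"
    show "\<forall>\<^sub>F x in at_top. ereal (f x * q x) < y"
    proof (cases y)
      case PInf then show ?thesis by simp
    next
      case MInf then show ?thesis using y by simp
    next
      case (real yr)
      obtain z where z: "?L < ereal z" "ereal z < y" using ereal_dense2[OF y] by blast
      have ev1: "\<forall>\<^sub>F x in at_top. ereal (f x) < ereal z"
        using Limsup_le_iff[THEN iffD1, OF order_refl] z(1) by blast
      have zy: "z < yr" using z(2) real by simp
      have ev2: "\<forall>\<^sub>F x in at_top. q x < 1 + (yr - z)"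
        by (rule order_tendstoD(2)[OF q]) (use zy in simp)
      from ev1 ev2 f show ?thesis
      proof eventually_elim
        case (elim x)
        have "f x * q x \<le> f x * (1 + (yr - z))" using elim zy by (intro mult_left_mono) auto
        also have "\<dots> = f x + f x * (yr - z)" by (simp add: algebra_simps)
        also have "\<dots> \<le> f x + (yr - z)" using elim zy by (intro add_left_mono) (simp add: mult_le_cancel_right1)
        also have "\<dots> < yr" using elim by simp
        finally show ?case using real by simp
      qed
    qed
  qed
  then show ?thesis using Limsup_le_iff by blast
qed

lemma Bstar_equiv:
  assumes E: "nnp E" and D: "nnp D" and posE: "\<And>x. 0 < tail E x" and posD: "\<And>x. 0 < tail D x"
    and r: "((\<lambda>x. tail E x / tail D x) \<longlongrightarrow> 1) at_top" and v: "1 \<le> v"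
  shows "Bstar E v = Bstar D v"
proof -
  define q where "q x = (tail E (v * x) / tail D (v * x)) / (tail E x / tail D x)" for x
  have vx: "filterlim (\<lambda>x. v * x) at_top at_top"
    using v by (intro filterlim_tendsto_pos_mult_at_top[OF tendsto_const _ filterlim_ident]) auto
  have q: "(q \<longlongrightarrow> 1) at_top"
  proof -
    have "(q \<longlongrightarrow> 1 / 1) at_top" unfolding q_def
      by (intro tendsto_divide filterlim_compose[OF r vx] r) auto
    then show ?thesis by simp
  qed
  have qi: "((\<lambda>x. 1 / q x) \<longlongrightarrow> 1) at_top" using tendsto_divide[OF tendsto_const q, of 1] by simp
  have eqE: "tail E (v * x) / tail E x = (tail D (v * x) / tail D x) * q x" for x
    using posE[of x] posE[of "v * x"] posD[of x] posD[of "v * x"] by (simp add: q_def field_simps)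
  have eqD: "tail D (v * x) / tail D x = (tail E (v * x) / tail E x) * (1 / q x)" for x
    using posE[of x] posE[of "v * x"] posD[of x] posD[of "v * x"] by (simp add: q_def field_simps)
  have bnd: "\<forall>\<^sub>F x in at_top. 0 \<le> tail Z (v * x) / tail Z x \<and> tail Z (v * x) / tail Z x \<le> 1"
    if Z: "nnp Z" and pZ: "\<And>x. 0 < tail Z x" for Z
    using eventually_ge_at_top[of 0]
  proof eventually_elim
    case (elim x)
    have "x \<le> v * x" using elim v by (simp add: mult_le_cancel_right1)
    then have "tail Z (v * x) \<le> tail Z x" by (rule tail_antimono[OF Z])
    then show ?case using pZ[of x] by (simp add: tail_nonneg)
  qed
  have "Bstar E v \<le> Bstar D v"
    unfolding Bstar_def eqE by (rule Limsup_mult_tendsto1[OF bnd[OF D posD] q])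
  moreover have "Bstar D v \<le> Bstar E v"
    unfolding Bstar_def eqD[of] by (rule Limsup_mult_tendsto1[OF bnd[OF E posE] qi])
  ultimately show ?thesis by simp
qed

lemma Lim_cong_ev:
  assumes "\<forall>\<^sub>F x in F. f x = g x" shows "Lim F f = Lim F g"
  by (rule Lim_cong[OF assms refl])

lemma Kminus_equiv:
  assumes E: "nnp E" and D: "nnp D" and posE: "\<And>x. 0 < tail E x" and posD: "\<And>x. 0 < tail D x"
    and r: "((\<lambda>x. tail E x / tail D x) \<longlongrightarrow> 1) at_top"
  shows "Kminus E = Kminus D"
  unfolding Kminus_def
proof (rule Lim_cong_ev)
  have "\<forall>\<^sub>F v in at_right 1. 1 < (v::real)" by (simp add: eventually_at_right_less)
  then show "\<forall>\<^sub>F v in at_right 1. (if Bstar E v = 0 then \<infinity> else ereal (- ln (real_of_ereal (Bstar E v)) / ln v)) =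
      (if Bstar D v = 0 then \<infinity> else ereal (- ln (real_of_ereal (Bstar D v)) / ln v))"
    by eventually_elim (simp add: Bstar_equiv[OF E D posE posD r])
qed



lemma frac_sum_le:
  fixes a b a' b' :: real
  assumes "0 < a" "0 < b" "a \<le> a'" "b \<le> b'"
  shows "(a' + b') / (a + b) \<le> a' / a + b' / b - 1"
proof -
  have ab: "a + b \<noteq> 0" using assms by simp
  have "(a' + b') / (a + b) = (a' - a) / (a + b) + (b' - b) / (a + b) + 1"
    using ab by (simp add: divide_simps)
  also have "(a' - a) / (a + b) \<le> (a' - a) / a" using assms by (intro divide_left_mono) auto
  also have "(b' - b) / (a + b) \<le> (b' - b) / b" using assms by (intro divide_left_mono) auto
  also have "(a' - a) / a + (b' - b) / b + 1 = a' / a + b' / b - 1" using assms by (simp add: field_simps)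
  finally show ?thesis by simp
qed

lemma aux_div:
  fixes G S m c :: real assumes c: "0 < c" and m: "0 < m" and G: "G * c \<le> S"
  shows "G / m \<le> (S / m) / c"
proof -
  have "G \<le> S / c" using c G by (simp add: pos_le_divide_eq)
  then have "G / m \<le> (S / c) / m" using m by (intro divide_right_mono) auto
  then show ?thesis by (simp add: divide_divide_eq_left mult.commute)
qed

lemma shiftsum_L:
  assumes H1: "nnp H1" and H2: "nnp H2" and p1: "\<And>x. 0 < tail H1 x" and p2: "\<And>x. 0 < tail H2 x"
    and L1: "((\<lambda>x. tail H1 (x - h) / tail H1 x) \<longlongrightarrow> 1) at_top"
    and L2: "((\<lambda>x. tail H2 (x - h) / tail H2 x) \<longlongrightarrow> 1) at_top" and h: "0 \<le> h"
  shows "((\<lambda>x. (tail H1 (x - h) + tail H2 (x - h)) / (tail H1 x + tail H2 x)) \<longlongrightarrow> 1) at_top"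
proof (rule tendsto_sandwich)
  show "\<forall>\<^sub>F x in at_top. 1 \<le> (tail H1 (x - h) + tail H2 (x - h)) / (tail H1 x + tail H2 x)"
  proof (intro always_eventually allI)
    fix x
    have "tail H1 x \<le> tail H1 (x - h)" "tail H2 x \<le> tail H2 (x - h)" using h by (auto intro!: tail_antimono H1 H2)
    then show "1 \<le> (tail H1 (x - h) + tail H2 (x - h)) / (tail H1 x + tail H2 x)"
      using p1[of x] p2[of x] by simp
  qed
  show "\<forall>\<^sub>F x in at_top. (tail H1 (x - h) + tail H2 (x - h)) / (tail H1 x + tail H2 x)
     \<le> tail H1 (x - h) / tail H1 x + tail H2 (x - h) / tail H2 x - 1"
  proof (intro always_eventually allI frac_sum_le p1 p2)
    fix x
    show "tail H1 x \<le> tail H1 (x - h)" "tail H2 x \<le> tail H2 (x - h)" using h by (auto intro!: tail_antimono H1 H2)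
  qed
  have "((\<lambda>x. tail H1 (x - h) / tail H1 x + tail H2 (x - h) / tail H2 x - 1) \<longlongrightarrow> 1 + 1 - 1) at_top"
    by (intro tendsto_intros L1 L2)
  then show "((\<lambda>x. tail H1 (x - h) / tail H1 x + tail H2 (x - h) / tail H2 x - 1) \<longlongrightarrow> 1) at_top" by simp
qed (rule tendsto_const)

lemma maxsum:
  assumes H1: "nnp H1" and H2: "nnp H2" and p1: "\<And>x. 0 < tail H1 x" and p2: "\<And>x. 0 < tail H2 x"
    and L1: "\<And>y. 0 < y \<Longrightarrow> ((\<lambda>x. tail H1 (x - y) / tail H1 x) \<longlongrightarrow> 1) at_top"
    and L2: "\<And>y. 0 < y \<Longrightarrow> ((\<lambda>x. tail H2 (x - y) / tail H2 x) \<longlongrightarrow> 1) at_top"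
    and D: "nnp D" and S: "S2 D"
    and d1: "\<And>t. tail H1 t \<le> tail D t" and d2: "\<And>t. tail H2 t \<le> tail D t"
    and dG: "\<And>t. tail D t \<le> tail (H1 \<star> H2) t"
  shows "((\<lambda>x. tail (H1 \<star> H2) x / (tail H1 x + tail H2 x)) \<longlongrightarrow> 1) at_top"
proof (rule order_tendstoI)
  have pD: "0 < tail D x" for x using p1[of x] d1[of x] by simp
  fix a' :: real assume a': "a' < 1"
  have "((\<lambda>x. 1 - tail H2 x) \<longlongrightarrow> 1 - 0) at_top" by (intro tendsto_intros tail_tendsto_0[OF H2])
  then have "\<forall>\<^sub>F x in at_top. a' < 1 - tail H2 x" using a' by (auto dest: order_tendstoD(1))
  then show "\<forall>\<^sub>F x in at_top. a' < tail (H1 \<star> H2) x / (tail H1 x + tail H2 x)"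
  proof eventually_elim
    case (elim x)
    have m: "0 < tail H1 x + tail H2 x" using p1[of x] p2[of x] by simp
    have lo: "tail H1 x + tail H2 x - tail H1 x * tail H2 x \<le> tail (H1 \<star> H2) x" by (rule tail_conv_lower[OF H1 H2])
    have "tail H1 x * tail H2 x \<le> (tail H1 x + tail H2 x) * tail H2 x"
      using p2[of x] p1[of x] by (intro mult_right_mono) auto
    moreover have "0 \<le> tail H2 x * tail H2 x" by simp
    moreover have "(tail H1 x + tail H2 x) * (1 - tail H2 x) = tail H1 x + tail H2 x - (tail H1 x * tail H2 x + tail H2 x * tail H2 x)"
      by (simp add: algebra_simps)
    ultimately have "(tail H1 x + tail H2 x) * (1 - tail H2 x) \<le> tail (H1 \<star> H2) x" using lo by linarith
    then have "1 - tail H2 x \<le> tail (H1 \<star> H2) x / (tail H1 x + tail H2 x)"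
      using m by (simp add: pos_le_divide_eq mult.commute)
    then show ?case using elim by simp
  qed
next
  have pD: "0 < tail D x" for x using p1[of x] d1[of x] by simp
  fix b' :: real assume b': "1 < b'"
  define \<eta> where "\<eta> = (1 - 1 / b') / 4"
  have \<eta>: "0 < \<eta>" using b' by (simp add: \<eta>_def)
  have "\<forall>\<^sub>F x in at_top. tail D x < \<eta>" by (rule order_tendstoD(2)[OF tail_tendsto_0[OF D] \<eta>])
  then obtain H0 where H0: "\<And>t. t \<ge> H0 \<Longrightarrow> tail D t < \<eta>" by (auto simp: eventually_at_top_linorder)
  define h where "h = max H0 1"
  have h: "0 < h" "H0 \<le> h" by (auto simp: h_def)
  have Dh: "tail D h < \<eta>" using H0 h by auto
  have Dh0: "0 \<le> tail D h" by (simp add: tail_nonneg)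
  let ?r = "\<lambda>x. tail (D \<star> D) x / tail D x - 2 * (1 - tail D h)"
  let ?m = "\<lambda>x. (tail H1 (x - h) + tail H2 (x - h)) / (tail H1 x + tail H2 x)"
  let ?u = "\<lambda>x. ?m x / (1 - max (?r x) 0)"
  have rlim: "(?r \<longlongrightarrow> 2 - 2 * (1 - tail D h)) at_top"
    using S unfolding S2_def by (intro tendsto_intros) auto
  have mlim: "(?m \<longlongrightarrow> 1) at_top"
    by (rule shiftsum_L[OF H1 H2 p1 p2 L1[OF h(1)] L2[OF h(1)]]) (use h in simp)
  have r2: "2 - 2 * (1 - tail D h) = 2 * tail D h" by simp
  have ne: "1 - max (2 * tail D h) 0 \<noteq> 0"
  proof -
    have "2 * tail D h < (1 - 1 / b') / 2" using Dh by (simp add: \<eta>_def)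
    also have "\<dots> < 1" using b' by (simp add: less_trans[OF _ zero_less_divide_1_iff[THEN iffD2]])
    finally show ?thesis using Dh0 by simp
  qed
  have rlim': "(?r \<longlongrightarrow> 2 * tail D h) at_top" using rlim unfolding r2 .
  have "(?u \<longlongrightarrow> 1 / (1 - max (2 * tail D h) 0)) at_top"
    by (rule tendsto_divide[OF mlim tendsto_diff[OF tendsto_const tendsto_max[OF rlim' tendsto_const]] ne])
  moreover have "1 / (1 - max (2 * tail D h) 0) < b'"
  proof -
    have mx: "max (2 * tail D h) 0 = 2 * tail D h" using Dh0 by simp
    have t1: "2 * tail D h < (1 - 1 / b') / 2" using Dh by (simp add: \<eta>_def)
    have bp: "0 < 1 / b'" using b' by simp
    from t1 have "1 / b' < 1 - 2 * tail D h" using b' by (simp add: field_simps)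
    then have c1: "1 < (1 - 2 * tail D h) * b'" using b' by (simp add: divide_less_eq)
    have "(1 - 1 / b') / 2 \<le> 1 / 2" using bp by simp
    then have q: "0 < 1 - 2 * tail D h" using t1 by linarith
    have "1 / (1 - 2 * tail D h) < b'" using c1 q by (simp add: divide_less_eq mult.commute)
    then show ?thesis using mx by simp
  qed
  ultimately have ev1: "\<forall>\<^sub>F x in at_top. ?u x < b'" by (rule order_tendstoD(2))
  have "\<eta> \<le> 1 / 4" using b' by (simp add: \<eta>_def)
  then have "2 * tail D h < 1 / 2" using Dh by linarith
  then have "\<forall>\<^sub>F x in at_top. ?r x < 1 / 2" by (rule order_tendstoD(2)[OF rlim'])
  then show "\<forall>\<^sub>F x in at_top. tail (H1 \<star> H2) x / (tail H1 x + tail H2 x) < b'"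
    using ev1 eventually_ge_at_top[of h]
  proof eventually_elim
    case (elim x)
    let ?G = "tail (H1 \<star> H2) x"
    have m: "0 < tail H1 x + tail H2 x" using p1[of x] p2[of x] by simp
    have up: "?G \<le> tail H1 (x - h) + tail H2 (x - h) + 1 * 1 * (tail (D \<star> D) x - 2 * (1 - tail D h) * tail D x)"
      by (rule tail_conv_upper[OF H1 H2 D _ _ elim(3)]) (use d1 d2 in auto)
    have "tail (D \<star> D) x - 2 * (1 - tail D h) * tail D x = ?r x * tail D x"
      using pD[of x] by (simp add: field_simps)
    also have "\<dots> \<le> max (?r x) 0 * ?G"
      using pD[of x] dG[of x] by (intro mult_mono) (auto simp: less_imp_le)
    finally have "?G \<le> tail H1 (x - h) + tail H2 (x - h) + max (?r x) 0 * ?G" using up by simp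
    then have G1: "?G * (1 - max (?r x) 0) \<le> tail H1 (x - h) + tail H2 (x - h)" by (simp add: algebra_simps)
    have "?r x < 1" using elim(1) by linarith
    then have "max (?r x) 0 < 1" by (simp only: max_less_iff_conj) simp
    then have pos: "0 < 1 - max (?r x) 0" by linarith
    have "?G / (tail H1 x + tail H2 x) \<le> ?u x" by (rule aux_div[OF pos m G1])
    then show ?case using elim(2) by simp
  qed
qed



lemma classL_D:
  assumes "classL B"
  shows "\<And>x. 0 < tail B x" "\<And>y. 0 < y \<Longrightarrow> ((\<lambda>x. tail B (x - y) / tail B x) \<longlongrightarrow> 1) at_top"
  using assms by (auto simp: classL_def inf_right_endpoint_def)

lemma abstract_main:
  assumes H1: "nnp H1" and H2: "nnp H2" and F: "nnp F"
    and L1: "classL H1" and L2: "classL H2"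
    and FM: "\<And>t. tail H1 t + tail H2 t - tail H1 t * tail H2 t \<le> tail F t"
    and FG: "\<And>t. tail F t \<le> tail (H1 \<star> H2) t"
  shows "classAstar F \<longleftrightarrow> classAstar (H1 \<star> H2)"
proof -
  let ?G = "H1 \<star> H2"
  have G: "nnp ?G" by (rule nnp_conv[OF H1 H2])
  note p1 = classL_D(1)[OF L1] and p2 = classL_D(1)[OF L2]
  note l1 = classL_D(2)[OF L1] and l2 = classL_D(2)[OF L2]
  have hF1: "tail H1 t \<le> tail F t" for t
  proof -
    have "0 \<le> tail H2 t * (1 - tail H1 t)" using tail_le1[OF H1] by (simp add: tail_nonneg)
    then show ?thesis using FM[of t] by (simp add: algebra_simps)
  qed
  have hF2: "tail H2 t \<le> tail F t" for t
  proof -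
    have "0 \<le> tail H1 t * (1 - tail H2 t)" using tail_le1[OF H2] by (simp add: tail_nonneg)
    then show ?thesis using FM[of t] by (simp add: algebra_simps)
  qed
  have pF: "0 < tail F x" for x using p1[of x] hF1[of x] by simp
  have pG: "0 < tail ?G x" for x using pF[of x] FG[of x] by simp
  have mpos: "0 < tail H1 x + tail H2 x" for x using p1[of x] p2[of x] by simp
  have FGr: "((\<lambda>x. tail F x / tail ?G x) \<longlongrightarrow> 1) at_top"
    if Gm: "((\<lambda>x. tail ?G x / (tail H1 x + tail H2 x)) \<longlongrightarrow> 1) at_top"
  proof -
    have Fm: "((\<lambda>x. tail F x / (tail H1 x + tail H2 x)) \<longlongrightarrow> 1) at_top"
    proof (rule tendsto_sandwich)
      show "\<forall>\<^sub>F x in at_top. 1 - tail H2 x \<le> tail F x / (tail H1 x + tail H2 x)"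
      proof (intro always_eventually allI)
        fix x
        have "tail H1 x * tail H2 x \<le> (tail H1 x + tail H2 x) * tail H2 x"
          using p2[of x] p1[of x] by (intro mult_right_mono) auto
        moreover have "(tail H1 x + tail H2 x) * (1 - tail H2 x) = tail H1 x + tail H2 x - (tail H1 x * tail H2 x + tail H2 x * tail H2 x)"
          by (simp add: algebra_simps)
        moreover have "0 \<le> tail H2 x * tail H2 x" by simp
        ultimately have "(tail H1 x + tail H2 x) * (1 - tail H2 x) \<le> tail F x" using FM[of x] by linarith
        then show "1 - tail H2 x \<le> tail F x / (tail H1 x + tail H2 x)"
          using mpos[of x] by (simp add: pos_le_divide_eq mult.commute)
      qed
      show "\<forall>\<^sub>F x in at_top. tail F x / (tail H1 x + tail H2 x) \<le> tail ?G x / (tail H1 x + tail H2 x)"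
        using FG mpos by (intro always_eventually allI divide_right_mono) (auto simp: less_imp_le)
      have "((\<lambda>x. 1 - tail H2 x) \<longlongrightarrow> 1 - 0) at_top" by (intro tendsto_intros tail_tendsto_0[OF H2])
      then show "((\<lambda>x. 1 - tail H2 x) \<longlongrightarrow> 1) at_top" by simp
    qed (rule Gm)
    have lim: "((\<lambda>x. (tail F x / (tail H1 x + tail H2 x)) / (tail ?G x / (tail H1 x + tail H2 x))) \<longlongrightarrow> 1 / 1) at_top"
      by (intro tendsto_divide Fm Gm) auto
    have "(tail F x / (tail H1 x + tail H2 x)) / (tail ?G x / (tail H1 x + tail H2 x)) = tail F x / tail ?G x" for x
      using mpos[of x] by simp
    then have eq: "(\<lambda>x. (tail F x / (tail H1 x + tail H2 x)) / (tail ?G x / (tail H1 x + tail H2 x))) = (\<lambda>x. tail F x / tail ?G x)"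
      by (intro ext)
    show ?thesis using lim unfolding eq by simp
  qed
  have inv: "((\<lambda>x. tail ?G x / tail F x) \<longlongrightarrow> 1) at_top" if r: "((\<lambda>x. tail F x / tail ?G x) \<longlongrightarrow> 1) at_top"
  proof -
    have "((\<lambda>x. 1 / (tail F x / tail ?G x)) \<longlongrightarrow> 1 / 1) at_top" by (intro tendsto_divide tendsto_const r) auto
    moreover have "1 / (tail F x / tail ?G x) = tail ?G x / tail F x" for x by simp
    ultimately show ?thesis by simp
  qed
  show ?thesis
  proof
    assume AF: "classAstar F"
    then have SF: "S2 F" using classS_S2[OF F] by (simp add: classAstar_def)
    have Gm: "((\<lambda>x. tail ?G x / (tail H1 x + tail H2 x)) \<longlongrightarrow> 1) at_top"
      by (rule maxsum[OF H1 H2 p1 p2 l1 l2 F SF hF1 hF2 FG])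
    have r: "((\<lambda>x. tail ?G x / tail F x) \<longlongrightarrow> 1) at_top" by (rule inv[OF FGr[OF Gm]])
    have "classS ?G" by (rule equiv_S[OF G F pG pF SF r])
    moreover have "Kminus ?G = Kminus F" by (rule Kminus_equiv[OF G F pG pF r])
    ultimately show "classAstar ?G" using AF by (simp add: classAstar_def)
  next
    assume AG: "classAstar ?G"
    then have SG: "S2 ?G" using classS_S2[OF G] by (simp add: classAstar_def)
    have hG1: "tail H1 t \<le> tail ?G t" for t using hF1[of t] FG[of t] by simp
    have hG2: "tail H2 t \<le> tail ?G t" for t using hF2[of t] FG[of t] by simp
    have Gm: "((\<lambda>x. tail ?G x / (tail H1 x + tail H2 x)) \<longlongrightarrow> 1) at_top"
      by (rule maxsum[OF H1 H2 p1 p2 l1 l2 G SG hG1 hG2 order_refl])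
    have r: "((\<lambda>x. tail F x / tail ?G x) \<longlongrightarrow> 1) at_top" by (rule FGr[OF Gm])
    have "classS F" by (rule equiv_S[OF F G pF pG SG r])
    moreover have "Kminus F = Kminus ?G" by (rule Kminus_equiv[OF F G pF pG r])
    ultimately show "classAstar F" using AG by (simp add: classAstar_def)
  qed
qed



lemma scale_mem_iff:
  fixes z :: "'a::real_vector"
  assumes "0 < u" shows "z \<in> (\<lambda>a. u *\<^sub>R a) ` A \<longleftrightarrow> (1 / u) *\<^sub>R z \<in> A"
proof
  assume "z \<in> (\<lambda>a. u *\<^sub>R a) ` A"
  then obtain a where "a \<in> A" "z = u *\<^sub>R a" by auto
  then show "(1 / u) *\<^sub>R z \<in> A" using assms by simp
next
  assume "(1 / u) *\<^sub>R z \<in> A"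
  moreover have "z = u *\<^sub>R ((1 / u) *\<^sub>R z)" using assms by simp
  ultimately show "z \<in> (\<lambda>a. u *\<^sub>R a) ` A" by blast
qed

lemma classR_sep:
  fixes A :: "(real ^ 'd) set"
  assumes "classR A" shows "\<exists>r>0. \<forall>a\<in>A. r \<le> norm a"
proof -
  have "0 \<notin> closure A" using assms by (simp add: classR_def)
  then obtain e where "e > 0" "\<forall>y\<in>A. \<not> dist y 0 < e" unfolding closure_approachable by auto
  then show ?thesis by (intro exI[of _ e]) (auto simp: not_less)
qed

definition ZS :: "(real ^ 'd) set \<Rightarrow> real ^ 'd \<Rightarrow> real set" where
  "ZS A z = {u. u > 0 \<and> z \<in> (\<lambda>a. u *\<^sub>R a) ` A} \<union> {0}"

lemma ZA_ZS: "ZA A z = Sup (ZS A z)" by (simp add: ZA_def ZS_def)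

lemma ZS_bdd:
  fixes A :: "(real ^ 'd) set"
  assumes "classR A" shows "bdd_above (ZS A z)"
proof -
  obtain r where r: "r > 0" "\<forall>a\<in>A. r \<le> norm a" using classR_sep[OF assms] by blast
  show ?thesis
  proof (rule bdd_aboveI[of _ "norm z / r"])
    fix u assume "u \<in> ZS A z"
    then consider "u = 0" | "u > 0" "z \<in> (\<lambda>a. u *\<^sub>R a) ` A" by (auto simp: ZS_def)
    then show "u \<le> norm z / r"
    proof cases
      case 1 then show ?thesis using r by simp
    next
      case 2
      then obtain a where a: "a \<in> A" "z = u *\<^sub>R a" by auto
      then have "norm z = u * norm a" using 2 by simp
      moreover have "u * r \<le> u * norm a" using r a 2 by (intro mult_left_mono) auto
      ultimately show ?thesis using r by (simp add: pos_le_divide_eq)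
    qed
  qed
qed

lemma ZA_nonneg: assumes "classR A" shows "0 \<le> ZA A z"
  unfolding ZA_ZS by (rule cSup_upper[OF _ ZS_bdd[OF assms]]) (simp add: ZS_def)

lemma ZA_upper:
  assumes "classR A" "0 < u" "z \<in> (\<lambda>a. u *\<^sub>R a) ` A" shows "u \<le> ZA A z"
  unfolding ZA_ZS by (rule cSup_upper[OF _ ZS_bdd[OF assms(1)]]) (use assms in \<open>simp add: ZS_def\<close>)

lemma ZA_least:
  assumes "0 \<le> c" "\<And>u. 0 < u \<Longrightarrow> z \<in> (\<lambda>a. u *\<^sub>R a) ` A \<Longrightarrow> u \<le> c" shows "ZA A z \<le> c"
  unfolding ZA_ZS by (rule cSup_least) (use assms in \<open>auto simp: ZS_def\<close>)

lemma ZA_gt_iff: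
  assumes "classR A" "0 \<le> x" shows "x < ZA A z \<longleftrightarrow> (\<exists>u>x. z \<in> (\<lambda>a. u *\<^sub>R a) ` A)"
proof -
  have ne: "ZS A z \<noteq> {}" by (simp add: ZS_def)
  have "x < ZA A z \<longleftrightarrow> (\<exists>u\<in>ZS A z. x < u)" unfolding ZA_ZS by (rule less_cSup_iff[OF ne ZS_bdd[OF assms(1)]])
  also have "\<dots> \<longleftrightarrow> (\<exists>u>x. z \<in> (\<lambda>a. u *\<^sub>R a) ` A)"
  proof
    assume "\<exists>u\<in>ZS A z. x < u"
    then obtain u where "u \<in> ZS A z" "x < u" by blast
    then show "\<exists>u>x. z \<in> (\<lambda>a. u *\<^sub>R a) ` A" using assms(2) by (auto simp: ZS_def)
  next
    assume "\<exists>u>x. z \<in> (\<lambda>a. u *\<^sub>R a) ` A"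
    then obtain u where "u > x" "z \<in> (\<lambda>a. u *\<^sub>R a) ` A" by blast
    then have "u \<in> ZS A z" using assms(2) by (simp add: ZS_def)
    then show "\<exists>u\<in>ZS A z. x < u" using \<open>u > x\<close> by blast
  qed
  finally show ?thesis .
qed

lemma ZA_subadd:
  fixes A :: "(real ^ 'd) set"
  assumes R: "classR A" shows "ZA A (z1 + z2) \<le> ZA A z1 + ZA A z2"
proof (rule ZA_least)
  show "0 \<le> ZA A z1 + ZA A z2" using ZA_nonneg[OF R] by (simp add: add_nonneg_nonneg)
  fix u assume u: "0 < u" and zu: "z1 + z2 \<in> (\<lambda>a. u *\<^sub>R a) ` A"
  show "u \<le> ZA A z1 + ZA A z2"
  proof (rule ccontr)
    assume "\<not> u \<le> ZA A z1 + ZA A z2"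
    then have lt: "ZA A z1 + ZA A z2 < u" by simp
    define e where "e = (u - ZA A z1 - ZA A z2) / 2"
    have e: "0 < e" using lt by (simp add: e_def)
    define u1 where "u1 = ZA A z1 + e"
    define u2 where "u2 = ZA A z2 + e"
    have u1: "0 < u1" and u2: "0 < u2" using e ZA_nonneg[OF R] by (auto simp: u1_def u2_def add_nonneg_pos)
    have usum: "u1 + u2 = u" by (simp add: u1_def u2_def e_def)
    have n1: "(1 / u1) *\<^sub>R z1 \<notin> A"
    proof
      assume "(1 / u1) *\<^sub>R z1 \<in> A"
      then have "u1 \<le> ZA A z1" using ZA_upper[OF R u1] scale_mem_iff[OF u1] by blast
      then show False using e by (simp add: u1_def)
    qed
    have n2: "(1 / u2) *\<^sub>R z2 \<notin> A"
    proof
      assume "(1 / u2) *\<^sub>R z2 \<in> A"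
      then have "u2 \<le> ZA A z2" using ZA_upper[OF R u2] scale_mem_iff[OF u2] by blast
      then show False using e by (simp add: u2_def)
    qed
    have cvx: "convex (- A)" using R by (simp add: classR_def)
    have "(u1 / u) *\<^sub>R ((1 / u1) *\<^sub>R z1) + (u2 / u) *\<^sub>R ((1 / u2) *\<^sub>R z2) \<in> - A"
      using cvx n1 n2 u1 u2 u usum unfolding convex_def
      by (metis ComplI add_divide_distrib divide_nonneg_pos divide_self less_imp_le order_less_irrefl)
    moreover have "(u1 / u) *\<^sub>R ((1 / u1) *\<^sub>R z1) + (u2 / u) *\<^sub>R ((1 / u2) *\<^sub>R z2) = (1 / u) *\<^sub>R (z1 + z2)"
      using u1 u2 by (simp add: scaleR_add_right)
    ultimately have "(1 / u) *\<^sub>R (z1 + z2) \<notin> A" by simp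
    then show False using zu scale_mem_iff[OF u] by blast
  qed
qed

lemma orthant_scale: "0 < u \<Longrightarrow> y \<in> orthant \<Longrightarrow> (1 / u) *\<^sub>R y \<in> orthant"
  by (simp add: orthant_def)

lemma ZA_mono:
  fixes A :: "(real ^ 'd) set"
  assumes R: "classR A" and y: "y \<in> orthant" shows "ZA A z \<le> ZA A (z + y)"
proof (rule ZA_least)
  show "0 \<le> ZA A (z + y)" by (rule ZA_nonneg[OF R])
  fix u assume u: "0 < u" and zu: "z \<in> (\<lambda>a. u *\<^sub>R a) ` A"
  then have "(1 / u) *\<^sub>R z \<in> A" using scale_mem_iff[OF u] by blast
  then have "(1 / u) *\<^sub>R z + (1 / u) *\<^sub>R y \<in> A"
    using R orthant_scale[OF u y] by (simp add: classR_def)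
  then have "(1 / u) *\<^sub>R (z + y) \<in> A" by (simp add: scaleR_add_right)
  then have "z + y \<in> (\<lambda>a. u *\<^sub>R a) ` A" using scale_mem_iff[OF u] by blast
  then show "u \<le> ZA A (z + y)" by (rule ZA_upper[OF R u])
qed

lemma ZA_measurable:
  fixes A :: "(real ^ 'd) set"
  assumes R: "classR A" shows "ZA A \<in> borel_measurable borel"
proof (subst borel_measurable_iff_greater, intro allI)
  fix x :: real
  show "{w \<in> space borel. x < ZA A w} \<in> sets borel"
  proof (cases "x < 0")
    case True
    then have "{w \<in> space borel. x < ZA A w} = UNIV" using ZA_nonneg[OF R] by (auto intro: less_le_trans)
    then show ?thesis by simp
  next
    case False
    then have "{w \<in> space borel. x < ZA A w} = (\<Union>u\<in>{x<..}. (\<lambda>a. u *\<^sub>R a) ` A)"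
      using ZA_gt_iff[OF R, of x] by auto
    moreover have "open (\<Union>u\<in>{x<..}. (\<lambda>a. u *\<^sub>R a) ` A)"
      using R False by (intro open_UN ballI open_scaling) (auto simp: classR_def)
    ultimately show ?thesis by simp
  qed
qed



lemma orthant_borel: "orthant \<in> sets (borel :: (real^'d) measure)"
proof -
  have "closed (orthant :: (real^'d) set)" unfolding orthant_def
    by (simp add: closed_Collect_all closed_Collect_le continuous_on_component)
  then show ?thesis by simp
qed

lemma distr_orthantD:
  fixes V :: "(real ^ 'd) measure"
  assumes "distr_orthant V"
  shows "prob_space V" "sets V = sets borel" "space V = UNIV" "AE z in V. z \<in> orthant"
proof -
  show P: "prob_space V" and S: "sets V = sets borel" using assms by (auto simp: distr_orthant_def)
  show "space V = UNIV" using sets_eq_imp_space_eq[OF S] by simp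
  interpret prob_space V by fact
  have "emeasure V orthant = 1" using assms by (simp add: distr_orthant_def)
  then have "prob orthant = 1" by (simp add: emeasure_eq_measure)
  then show "AE z in V. z \<in> orthant" using AE_in_set_eq_1[of orthant] orthant_borel S by simp
qed

lemma nnp_VA:
  fixes V :: "(real ^ 'd) measure"
  assumes R: "classR A" and V: "prob_space V" "sets V = sets borel"
  shows "nnp (VA A V)"
proof -
  have m: "ZA A \<in> measurable V borel" using ZA_measurable[OF R] by (simp add: measurable_cong_sets[OF V(2) refl])
  have "prob_space (VA A V)" unfolding VA_def by (rule prob_space.prob_space_distr[OF V(1) m])
  moreover have "AE x in VA A V. 0 \<le> x"
    unfolding VA_def by (subst AE_distr_iff[OF m]) (auto intro!: AE_I2 ZA_nonneg[OF R])
  ultimately show ?thesis by (simp add: nnp_def) (simp add: VA_def)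
qed

lemma tail_VA:
  fixes V :: "(real ^ 'd) measure"
  assumes R: "classR A" and V: "sets V = sets borel"
  shows "tail (VA A V) t = measure V {z \<in> space V. t < ZA A z}"
proof -
  have m: "ZA A \<in> measurable V borel" using ZA_measurable[OF R] by (simp add: measurable_cong_sets[OF V refl])
  show ?thesis unfolding tail_def VA_def by (subst measure_distr[OF m]) (auto intro!: arg_cong[where f="measure V"])
qed

theorem proposition4p2:
  fixes A :: "(real ^ 'd) set" and V1 V2 :: "(real ^ 'd) measure"
  assumes "classR A"
    and "distr_orthant V1" and "distr_orthant V2"
    and "classL (VA A V1)" and "classL (VA A V2)"
    and "min (Kminus (VA A V1)) (Kminus (VA A V2)) > 0"
  shows "classAstar (VA A (vconv V1 V2)) \<longleftrightarrow> classAstar (convolution (VA A V1) (VA A V2))"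
proof -
  note R = assms(1)
  note D1 = distr_orthantD[OF assms(2)] and D2 = distr_orthantD[OF assms(3)]
  interpret V1: prob_space V1 by (rule D1(1))
  interpret V2: prob_space V2 by (rule D2(1))
  interpret P: prob_space "V1 \<Otimes>\<^sub>M V2" by (rule prob_space_pair) unfold_locales
  interpret pair_sigma_finite V1 V2 ..
  have s1[measurable_cong]: "sets V1 = sets borel" and s2[measurable_cong]: "sets V2 = sets borel" using D1 D2 by auto
  have sP: "sets (V1 \<Otimes>\<^sub>M V2) = sets (borel \<Otimes>\<^sub>M borel)" by (intro sets_pair_measure_cong s1 s2)
  have spP: "space (V1 \<Otimes>\<^sub>M V2) = UNIV" using D1(3) D2(3) by (simp add: space_pair_measure)
  have ZAm[measurable]: "ZA A \<in> borel_measurable borel" by (rule ZA_measurable[OF R])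
  let ?H1 = "VA A V1" and ?H2 = "VA A V2" and ?F = "VA A (vconv V1 V2)"
  have H1: "nnp ?H1" by (rule nnp_VA[OF R D1(1,2)])
  have H2: "nnp ?H2" by (rule nnp_VA[OF R D2(1,2)])
  have madd: "(\<lambda>(x, y). x + y :: real^'d) \<in> measurable (V1 \<Otimes>\<^sub>M V2) borel"
    by (subst measurable_cong_sets[OF sP refl]) measurable
  have vc: "prob_space (vconv V1 V2)" "sets (vconv V1 V2) = sets borel"
    unfolding vconv_def by (auto intro!: P.prob_space_distr madd)
  have F: "nnp ?F" by (rule nnp_VA[OF R vc])
  have predP: "{p \<in> space (V1 \<Otimes>\<^sub>M V2). Q p} \<in> sets (V1 \<Otimes>\<^sub>M V2)" if "Measurable.pred (borel \<Otimes>\<^sub>M borel) Q" for Q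
    using that unfolding sP by (simp add: pred_def spP D1(3) D2(3) space_pair_measure)
  have tailF: "tail ?F t = measure (V1 \<Otimes>\<^sub>M V2) {p \<in> space (V1 \<Otimes>\<^sub>M V2). t < ZA A (fst p + snd p)}" for t
  proof -
    have "tail ?F t = measure (vconv V1 V2) {z \<in> space (vconv V1 V2). t < ZA A z}" by (rule tail_VA[OF R vc(2)])
    also have "\<dots> = measure (V1 \<Otimes>\<^sub>M V2) {p \<in> space (V1 \<Otimes>\<^sub>M V2). t < ZA A (fst p + snd p)}"
      unfolding vconv_def by (subst measure_distr[OF madd]) (auto intro!: arg_cong[where f="measure _"] simp: spP)
    finally show ?thesis .
  qed
  have tailH1: "tail ?H1 t = measure V1 {z. t < ZA A z}" for t using tail_VA[OF R s1] D1(3) by simp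
  have tailH2: "tail ?H2 t = measure V2 {z. t < ZA A z}" for t using tail_VA[OF R s2] D2(3) by simp
  have AEo: "AE p in V1 \<Otimes>\<^sub>M V2. fst p \<in> orthant \<and> snd p \<in> orthant"
  proof -
    have "AE x in V1. AE y in V2. x \<in> orthant \<and> y \<in> orthant"
      using D1(4) D2(4) by (auto elim!: AE_mp)
    moreover have "{p \<in> space (V1 \<Otimes>\<^sub>M V2). fst p \<in> orthant \<and> snd p \<in> orthant} \<in> sets (V1 \<Otimes>\<^sub>M V2)"
    proof -
      have "{p \<in> space (V1 \<Otimes>\<^sub>M V2). fst p \<in> orthant \<and> snd p \<in> orthant} = orthant \<times> orthant"
        by (auto simp: spP)
      moreover have "orthant \<times> orthant \<in> sets (V1 \<Otimes>\<^sub>M V2)"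
        using orthant_borel by (intro pair_measureI) (auto simp: s1 s2)
      ultimately show ?thesis by simp
    qed
    ultimately show ?thesis by (subst (asm) AE_pair_iff) auto
  qed
  have FM: "tail ?H1 t + tail ?H2 t - tail ?H1 t * tail ?H2 t \<le> tail ?F t" for t
  proof -
    have B1: "{z. t < ZA A z} \<in> sets V1" and B2: "{z. t < ZA A z} \<in> sets V2" by (auto simp: s1 s2)
    have "tail ?H1 t + tail ?H2 t - tail ?H1 t * tail ?H2 t =
      measure (V1 \<Otimes>\<^sub>M V2) {p \<in> space (V1 \<Otimes>\<^sub>M V2). fst p \<in> {z. t < ZA A z} \<or> snd p \<in> {z. t < ZA A z}}"
      unfolding tailH1 tailH2 by (rule pair_union_cyl[OF D1(1) D2(1) B1 B2, symmetric])
    also have "\<dots> \<le> tail ?F t" unfolding tailF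
    proof (rule P.finite_measure_mono_AE)
      show "{p \<in> space (V1 \<Otimes>\<^sub>M V2). t < ZA A (fst p + snd p)} \<in> sets (V1 \<Otimes>\<^sub>M V2)"
        by (intro predP) measurable
      show "AE x in V1 \<Otimes>\<^sub>M V2. x \<in> {p \<in> space (V1 \<Otimes>\<^sub>M V2). fst p \<in> {z. t < ZA A z} \<or> snd p \<in> {z. t < ZA A z}} \<longrightarrow>
          x \<in> {p \<in> space (V1 \<Otimes>\<^sub>M V2). t < ZA A (fst p + snd p)}"
        using AEo
      proof (rule AE_mp, intro AE_I2 impI)
        fix p assume p: "fst p \<in> orthant \<and> snd p \<in> orthant"
          and pin: "p \<in> {p \<in> space (V1 \<Otimes>\<^sub>M V2). fst p \<in> {z. t < ZA A z} \<or> snd p \<in> {z. t < ZA A z}}"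
        have "ZA A (fst p) \<le> ZA A (fst p + snd p)" using ZA_mono[OF R] p by blast
        moreover have "ZA A (snd p) \<le> ZA A (fst p + snd p)" using ZA_mono[OF R, of "fst p" "snd p"] p
          by (simp add: add.commute)
        ultimately show "p \<in> {p \<in> space (V1 \<Otimes>\<^sub>M V2). t < ZA A (fst p + snd p)}" using pin by auto
      qed
    qed
    finally show ?thesis .
  qed
  have FG: "tail ?F t \<le> tail (?H1 \<star> ?H2) t" for t
  proof -
    have m1: "ZA A \<in> measurable V1 borel" and m2: "ZA A \<in> measurable V2 borel" by auto
    have fin2: "sigma_finite_measure (distr V2 borel (ZA A))"
      using H2 nnpD(1) unfolding VA_def by (auto intro: prob_space_imp_sigma_finite)
    have pd: "?H1 \<Otimes>\<^sub>M ?H2 = distr (V1 \<Otimes>\<^sub>M V2) (borel \<Otimes>\<^sub>M borel) (\<lambda>(x, y). (ZA A x, ZA A y))"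
      unfolding VA_def by (rule pair_measure_distr[OF m1 m2 fin2])
    have mz: "(\<lambda>(x, y). (ZA A x, ZA A y)) \<in> measurable (V1 \<Otimes>\<^sub>M V2) (borel \<Otimes>\<^sub>M borel)" by measurable
    have "tail (?H1 \<star> ?H2) t = measure (?H1 \<Otimes>\<^sub>M ?H2) {p \<in> space (?H1 \<Otimes>\<^sub>M ?H2). t < fst p + snd p}"
      by (rule tail_conv[OF H1 H2])
    also have "\<dots> = measure (V1 \<Otimes>\<^sub>M V2) {p \<in> space (V1 \<Otimes>\<^sub>M V2). t < ZA A (fst p) + ZA A (snd p)}"
    proof -
      have Sm: "{p \<in> space (borel \<Otimes>\<^sub>M borel). t < fst p + snd (p :: real \<times> real)} \<in> sets (borel \<Otimes>\<^sub>M borel)"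
        by measurable
      show ?thesis unfolding pd
        by (subst measure_distr[OF mz]) (use Sm in \<open>auto intro!: arg_cong[where f="measure _"] simp: spP space_pair_measure\<close>)
    qed
    finally have eq: "tail (?H1 \<star> ?H2) t = measure (V1 \<Otimes>\<^sub>M V2) {p \<in> space (V1 \<Otimes>\<^sub>M V2). t < ZA A (fst p) + ZA A (snd p)}" .
    show ?thesis unfolding eq tailF
      by (rule P.finite_measure_mono) (auto intro!: predP less_le_trans[OF _ ZA_subadd[OF R]])
  qed
  show ?thesis by (rule abstract_main[OF H1 H2 F assms(4,5) FM FG])
qed


end
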